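(* Let $\mathbf{a}=(a_1,a_2,a_3,a_4)\in\mathbb C^4$ and let $$S_{\mathbf a}=\{(x_1,x_2,x_3)\in\mathbb C^3 : x_1^2+x_2^2+x_3^2+x_1x_2x_3=a_1x_1+a_2x_2+a_3x_3+a_4\}.$$ Consider on the smooth part of $S_{\mathbf a}$ the three holomorphic foliations $\mathcal F_i=\ker(dx_i|_{S_{\mathbf a}})$, $i=1,2,3$ (the level curves of the coordinates), and the $3$-web $(\mathcal F_1,\mathcal F_2,\mathcal F_3)$ they form on the nonempty open set of points where it is regular. Then this $3$-web is locally parallelizable (at every point of that open set) if and only if $\mathbf a=(0,0,0,4)$.
   Context: A (local) regular $3$-web on a complex surface is a triple of pairwise transversal holomorphic foliations. It is locally parallelizable if near each point there are local holomorphic coordinates $(u,v)$ in which each of the three foliations is defined by a constant $1$-form $\alpha_i du+\beta_i dv$ ($\alpha_i,\beta_i\in\mathbb C$), i.e. is a foliation by parallel lines. *)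

theory Defs
  imports "HOL-Analysis.Analysis"
begin

definition Fa :: "complex^4 \<Rightarrow> complex^3 \<Rightarrow> complex" where
  "Fa a x = (x$1)^2 + (x$2)^2 + (x$3)^2 + x$1 * x$2 * x$3
            - (a$1 * x$1 + a$2 * x$2 + a$3 * x$3 + a$4)"

definition Sa :: "complex^4 \<Rightarrow> (complex^3) set" where
  "Sa a = {x. Fa a x = 0}"

definition smooth_pt :: "complex^4 \<Rightarrow> complex^3 \<Rightarrow> bool" where
  "smooth_pt a p \<longleftrightarrow> p \<in> Sa a \<and> frechet_derivative (Fa a) (at p) \<noteq> (\<lambda>v. 0)"

definition tangent_plane :: "complex^4 \<Rightarrow> complex^3 \<Rightarrow> (complex^3) set" where
  "tangent_plane a p = {v. frechet_derivative (Fa a) (at p) v = 0}"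

text \<open>The 3-web (F_1,F_2,F_3), F_i = ker (dx_i restricted to S_a), is regular at p if
  p is a smooth point and the three foliations are pairwise transversal at p, i.e. for
  i \<noteq> j the tangent lines ker(dx_i|T_pS) and ker(dx_j|T_pS) meet only in 0
  (this also forces each dx_i|T_pS to be nonzero, so each F_i is nonsingular at p).\<close>

definition web_regular :: "complex^4 \<Rightarrow> complex^3 \<Rightarrow> bool" where
  "web_regular a p \<longleftrightarrow> smooth_pt a p \<and>
     (\<forall>i j. i \<noteq> j \<longrightarrow>
        (\<forall>v \<in> tangent_plane a p. v$i = 0 \<and> v$j = 0 \<longrightarrow> v = 0))"

definition holo_map :: "(complex^2 \<Rightarrow> complex^3) \<Rightarrow> (complex^2 \<Rightarrow> complex^2 \<Rightarrow> complex^3)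
    \<Rightarrow> (complex^2) set \<Rightarrow> bool" where
  "holo_map psi Dpsi V \<longleftrightarrow> open V \<and>
     (\<forall>z\<in>V. (psi has_derivative Dpsi z) (at z) \<and>
             (\<forall>(c::complex) w. Dpsi z (c *s w) = c *s Dpsi z w))"

text \<open>The web is locally parallelizable at p: there are local holomorphic coordinates
  (u,v) on S_a near p (given by their inverse psi : V \<rightarrow> S_a \<inter> N, a holomorphic
  homeomorphism onto an open neighbourhood of p in S_a, inside the regular set, with
  injective differential, i.e. a biholomorphism), in which each foliation F_i is defined
  by a constant 1-form alpha_i du + beta_i dv, i.e. the kernel of the pull-back of dx_i
  at every point equals the kernel of alpha_i du + beta_i dv with (alpha_i,beta_i) \<noteq> 0.\<close>

definition locally_parallelizable_at :: "complex^4 \<Rightarrow> complex^3 \<Rightarrow> bool" where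
  "locally_parallelizable_at a p \<longleftrightarrow>
     (\<exists>V N psi phi Dpsi.
        open N \<and> p \<in> N \<and> Sa a \<inter> N \<subseteq> {q. web_regular a q} \<and>
        holo_map psi Dpsi V \<and>
        homeomorphism V (Sa a \<inter> N) psi phi \<and>
        (\<forall>z\<in>V. inj (Dpsi z)) \<and>
        (\<forall>i::3. \<exists>\<alpha> \<beta> :: complex. (\<alpha>, \<beta>) \<noteq> (0, 0) \<and>
           (\<forall>z\<in>V. {w. (Dpsi z w)$i = 0} = {w. \<alpha> * w$1 + \<beta> * w$2 = 0})))"

end

theory Submission
  imports Defs "HOL-Complex_Analysis.Complex_Analysis"
begin

no_notation fps_nth (infixl \<open>$\<close> 75)




definition Fp :: "complex \<Rightarrow> complex \<Rightarrow> complex \<Rightarrow> complex \<Rightarrow> complex \<Rightarrow> complex \<Rightarrow> complex \<Rightarrow> complex" where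
  "Fp b1 b2 b3 b4 y1 y2 y3 = y1^2 + y2^2 + y3^2 + y1*y2*y3 - (b1*y1 + b2*y2 + b3*y3 + b4)"

definition P1 :: "complex \<Rightarrow> complex \<Rightarrow> complex \<Rightarrow> complex \<Rightarrow> complex" where
  "P1 b1 y1 y2 y3 = 2*y1 + y2*y3 - b1"
definition P2 :: "complex \<Rightarrow> complex \<Rightarrow> complex \<Rightarrow> complex \<Rightarrow> complex" where
  "P2 b2 y1 y2 y3 = 2*y2 + y1*y3 - b2"
definition P3 :: "complex \<Rightarrow> complex \<Rightarrow> complex \<Rightarrow> complex \<Rightarrow> complex" where
  "P3 b3 y1 y2 y3 = 2*y3 + y1*y2 - b3"

definition Numc :: "complex \<Rightarrow> complex \<Rightarrow> complex \<Rightarrow> complex \<Rightarrow> complex \<Rightarrow> complex \<Rightarrow> complex" where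
  "Numc b1 b2 b3 y1 y2 y3 =
    (let F1 = 2*y1 + y2*y3 - b1; F2 = 2*y2 + y1*y3 - b2; F3 = 2*y3 + y1*y2 - b3;
         M = F1*F2*F3;
         N = F2*(2*F3-F1*y2)-F1*(y3*F3-F1*y1);
         M2 = y3*F2*F3+2*F1*F3+y1*F1*F2;
         M3 = y2*F2*F3+y1*F1*F3+2*F1*F2;
         N2 = 2*(2*F3-F1*y2)+F2*(2*y1-(y3*y2+F1)) - y3*(y3*F3-F1*y1);
         N3 = y1*(2*F3-F1*y2)+F2*(4-y2*y2) - (y2*(y3*F3-F1*y1)+F1*(F3+2*y3-y2*y1))
     in M*(F3*N2-F2*N3)-N*(F3*M2-F2*M3))"

definition FD :: "complex^4 \<Rightarrow> complex^3 \<Rightarrow> complex^3 \<Rightarrow> complex" where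
  "FD a p v = P1 (a$1) (p$1) (p$2) (p$3) * v$1 + P2 (a$2) (p$1) (p$2) (p$3) * v$2
             + P3 (a$3) (p$1) (p$2) (p$3) * v$3"


lemma has_derivative_vec_nth [derivative_intros]:
  "(f has_derivative f') F \<Longrightarrow> ((\<lambda>x. f x $ i) has_derivative (\<lambda>x. f' x $ i)) F"
  by (rule bounded_linear.has_derivative[OF bounded_linear_vec_nth])

lemma has_derivative_vec_nth_id [derivative_intros]:
  "((\<lambda>x. x $ i) has_derivative (\<lambda>x. x $ i)) F"
  by (rule bounded_linear_imp_has_derivative[OF bounded_linear_vec_nth])

definition ac :: "complex^4 \<Rightarrow> 3 \<Rightarrow> complex" where
  "ac a m = (if m = 1 then a$1 else if m = 2 then a$2 else a$3)"

lemma ac_simps [simp]: "ac a 1 = a$1" "ac a 2 = a$2" "ac a 3 = a$3"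
  by (simp_all add: ac_def)

lemma Fa_Fp: "Fa a x = Fp (a$1) (a$2) (a$3) (a$4) (x$1) (x$2) (x$3)"
  by (simp add: Fa_def Fp_def)

lemma Fp_perm:
  fixes i j k :: 3
  assumes "i \<noteq> j" "i \<noteq> k" "j \<noteq> k"
  shows "Fp (A 1) (A 2) (A 3) b4 (x$1) (x$2) (x$3) = Fp (A i) (A j) (A k) b4 (x$i) (x$j) (x$k)"
proof -
  have "(i,j,k) \<in> {(1,2,3),(1,3,2),(2,1,3),(2,3,1),(3,1,2),(3,2,1)}"
    using exhaust_3[of i] exhaust_3[of j] exhaust_3[of k] assms by auto
  then show ?thesis by (elim insertE emptyE) (simp_all add: Fp_def algebra_simps)
qed

lemma Fp_sign: "Fp (-b1) (-b2) b3 b4 (-y1) (-y2) y3 = Fp b1 b2 b3 b4 y1 y2 y3"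
  by (simp add: Fp_def power2_eq_square algebra_simps)

lemma Fa_has_derivative: "(Fa a has_derivative FD a p) (at p)"
proof -
  have "((\<lambda>x. Fa a x) has_derivative (\<lambda>v. 2*p$1* v$1 + 2*p$2* v$2 + 2*p$3* v$3
        + ((v$1*p$2 + p$1* v$2)*p$3 + p$1*p$2* v$3) - (a$1* v$1 + a$2* v$2 + a$3* v$3 + 0))) (at p)"
    unfolding Fa_def power2_eq_square
    by (rule derivative_eq_intros refl)+ (simp add: algebra_simps)
  moreover have "(\<lambda>v. 2*p$1* v$1 + 2*p$2* v$2 + 2*p$3* v$3
        + ((v$1*p$2 + p$1* v$2)*p$3 + p$1*p$2* v$3) - (a$1* v$1 + a$2* v$2 + a$3* v$3 + 0)) = FD a p"
    by (auto simp: FD_def P1_def P2_def P3_def algebra_simps fun_eq_iff)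
  ultimately show ?thesis by simp
qed

lemma frechet_Fa: "frechet_derivative (Fa a) (at p) = FD a p"
  using frechet_derivative_at[OF Fa_has_derivative] by simp

lemma regular_I:
  assumes "Fa a p = 0" "P1 (a$1) (p$1) (p$2) (p$3) \<noteq> 0" "P2 (a$2) (p$1) (p$2) (p$3) \<noteq> 0"
    "P3 (a$3) (p$1) (p$2) (p$3) \<noteq> 0"
  shows "web_regular a p"
proof -
  have sm: "smooth_pt a p"
  proof -
    have "FD a p (axis 1 1) \<noteq> 0" using assms(2) by (simp add: FD_def axis_def)
    then show ?thesis using assms(1) by (auto simp: smooth_pt_def Sa_def frechet_Fa)
  qed
  have "v = 0" if "i \<noteq> j" "FD a p v = 0" "v$i = 0" "v$j = 0" for i j :: 3 and v
  proof -
    have "v$1 = 0 \<and> v$2 = 0 \<and> v$3 = 0"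
      using exhaust_3[of i] exhaust_3[of j] that assms(2-4) by (auto simp: FD_def)
    then show ?thesis by (metis (mono_tags) exhaust_3 vec_eq_iff zero_index)
  qed
  then show ?thesis using sm by (auto simp: web_regular_def tangent_plane_def frechet_Fa)
qed


definition "Mf b1 b2 b3 y1 y2 y3 = P1 b1 y1 y2 y3 * P2 b2 y1 y2 y3 * P3 b3 y1 y2 y3"
definition "Nf b1 b2 b3 y1 y2 y3 = (let F1 = P1 b1 y1 y2 y3; F2 = P2 b2 y1 y2 y3; F3 = P3 b3 y1 y2 y3 in
   F2*(2* F3-F1* y2)-F1*(y3* F3-F1* y1))"
definition "M2f b1 b2 b3 y1 y2 y3 = (let F1 = P1 b1 y1 y2 y3; F2 = P2 b2 y1 y2 y3; F3 = P3 b3 y1 y2 y3 in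
   y3* F2* F3+2* F1* F3+y1* F1* F2)"
definition "M3f b1 b2 b3 y1 y2 y3 = (let F1 = P1 b1 y1 y2 y3; F2 = P2 b2 y1 y2 y3; F3 = P3 b3 y1 y2 y3 in
   y2* F2* F3+y1* F1* F3+2* F1* F2)"
definition "N2f b1 b2 b3 y1 y2 y3 = (let F1 = P1 b1 y1 y2 y3; F2 = P2 b2 y1 y2 y3; F3 = P3 b3 y1 y2 y3 in
   2*(2* F3-F1* y2)+F2*(2* y1-(y3* y2+F1)) - y3*(y3* F3-F1* y1))"
definition "N3f b1 b2 b3 y1 y2 y3 = (let F1 = P1 b1 y1 y2 y3; F2 = P2 b2 y1 y2 y3; F3 = P3 b3 y1 y2 y3 in
   y1*(2* F3-F1* y2)+F2*(4-y2* y2) - (y2*(y3* F3-F1* y1)+F1*(F3+2* y3-y2* y1)))"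

lemma Numc_eq: "Numc b1 b2 b3 y1 y2 y3 =
   Mf b1 b2 b3 y1 y2 y3 * (P3 b3 y1 y2 y3 * N2f b1 b2 b3 y1 y2 y3 - P2 b2 y1 y2 y3 * N3f b1 b2 b3 y1 y2 y3)
 - Nf b1 b2 b3 y1 y2 y3 * (P3 b3 y1 y2 y3 * M2f b1 b2 b3 y1 y2 y3 - P2 b2 y1 y2 y3 * M3f b1 b2 b3 y1 y2 y3)"
  by (simp add: Numc_def Mf_def Nf_def M2f_def M3f_def N2f_def N3f_def P1_def P2_def P3_def Let_def)

lemma Fp_deriv:
  assumes "(u has_field_derivative u') (at x)" "(v has_field_derivative v') (at x)"
    "(w has_field_derivative w') (at x)"
  shows "((\<lambda>\<sigma>. Fp b1 b2 b3 b4 (u \<sigma>) (v \<sigma>) (w \<sigma>)) has_field_derivative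
     (P1 b1 (u x) (v x) (w x) * u' + P2 b2 (u x) (v x) (w x) * v' + P3 b3 (u x) (v x) (w x) * w')) (at x)"
  unfolding Fp_def P1_def P2_def P3_def
  apply (rule derivative_eq_intros assms refl)+
  apply (simp add: algebra_simps)
  done

lemma P1_deriv:
  assumes "(u has_field_derivative u') (at x)" "(v has_field_derivative v') (at x)"
    "(w has_field_derivative w') (at x)"
  shows "((\<lambda>\<sigma>. P1 b1 (u \<sigma>) (v \<sigma>) (w \<sigma>)) has_field_derivative
     (2 * u' + v' * w x + v x * w')) (at x)"
  unfolding P1_def
  apply (rule derivative_eq_intros assms refl)+
  apply (simp add: algebra_simps)
  done

lemma P2_deriv:
  assumes "(u has_field_derivative u') (at x)" "(v has_field_derivative v') (at x)"
    "(w has_field_derivative w') (at x)"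
  shows "((\<lambda>\<sigma>. P2 b2 (u \<sigma>) (v \<sigma>) (w \<sigma>)) has_field_derivative
     (2 * v' + u' * w x + u x * w')) (at x)"
  unfolding P2_def
  apply (rule derivative_eq_intros assms refl)+
  apply (simp add: algebra_simps)
  done

lemma P3_deriv:
  assumes "(u has_field_derivative u') (at x)" "(v has_field_derivative v') (at x)"
    "(w has_field_derivative w') (at x)"
  shows "((\<lambda>\<sigma>. P3 b3 (u \<sigma>) (v \<sigma>) (w \<sigma>)) has_field_derivative
     (2 * w' + u' * v x + u x * v')) (at x)"
  unfolding P3_def
  apply (rule derivative_eq_intros assms refl)+
  apply (simp add: algebra_simps)
  done

lemma Mf_deriv:
  assumes "(v has_field_derivative v') (at x)" "(w has_field_derivative w') (at x)"
  shows "((\<lambda>\<sigma>. Mf b1 b2 b3 y1 (v \<sigma>) (w \<sigma>)) has_field_derivative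
     (M2f b1 b2 b3 y1 (v x) (w x) * v' + M3f b1 b2 b3 y1 (v x) (w x) * w')) (at x)"
proof -
  have d1: "((\<lambda>\<sigma>. P1 b1 y1 (v \<sigma>) (w \<sigma>)) has_field_derivative (v' * w x + v x * w')) (at x)"
    using P1_deriv[where u="\<lambda>_. y1" and u'=0, OF DERIV_const assms] by simp
  have d2: "((\<lambda>\<sigma>. P2 b2 y1 (v \<sigma>) (w \<sigma>)) has_field_derivative (2 * v' + y1 * w')) (at x)"
    using P2_deriv[where u="\<lambda>_. y1" and u'=0, OF DERIV_const assms] by simp
  have d3: "((\<lambda>\<sigma>. P3 b3 y1 (v \<sigma>) (w \<sigma>)) has_field_derivative (2 * w' + y1 * v')) (at x)"
    using P3_deriv[where u="\<lambda>_. y1" and u'=0, OF DERIV_const assms] by simp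
  show ?thesis unfolding Mf_def
    apply (rule derivative_eq_intros d1 d2 d3 refl)+
    apply (simp add: M2f_def M3f_def Let_def P1_def P2_def P3_def algebra_simps)
    done
qed

lemma Nf_deriv:
  assumes "(v has_field_derivative v') (at x)" "(w has_field_derivative w') (at x)"
  shows "((\<lambda>\<sigma>. Nf b1 b2 b3 y1 (v \<sigma>) (w \<sigma>)) has_field_derivative
     (N2f b1 b2 b3 y1 (v x) (w x) * v' + N3f b1 b2 b3 y1 (v x) (w x) * w')) (at x)"
proof -
  have d1: "((\<lambda>\<sigma>. P1 b1 y1 (v \<sigma>) (w \<sigma>)) has_field_derivative (v' * w x + v x * w')) (at x)"
    using P1_deriv[where u="\<lambda>_. y1" and u'=0, OF DERIV_const assms] by simp
  have d2: "((\<lambda>\<sigma>. P2 b2 y1 (v \<sigma>) (w \<sigma>)) has_field_derivative (2 * v' + y1 * w')) (at x)"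
    using P2_deriv[where u="\<lambda>_. y1" and u'=0, OF DERIV_const assms] by simp
  have d3: "((\<lambda>\<sigma>. P3 b3 y1 (v \<sigma>) (w \<sigma>)) has_field_derivative (2 * w' + y1 * v')) (at x)"
    using P3_deriv[where u="\<lambda>_. y1" and u'=0, OF DERIV_const assms] by simp
  show ?thesis unfolding Nf_def Let_def
    apply (rule derivative_eq_intros d1 d2 d3 assms refl)+
    apply (simp add: N2f_def N3f_def Let_def P1_def P2_def P3_def algebra_simps)
    done
qed

lemma deriv_zero_local:
  fixes \<phi> :: "complex \<Rightarrow> complex"
  assumes "(\<phi> has_field_derivative D) (at x)" "r > 0" "\<And>y. y \<in> ball x r \<Longrightarrow> \<phi> y = 0"
  shows "D = 0"
proof -
  have "((\<lambda>_. 0) has_field_derivative D) (at x)"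
    by (rule has_field_derivative_transform_within_open[OF assms(1), of "ball x r"])
       (use assms in auto)
  then show ?thesis using DERIV_const DERIV_unique by blast
qed


lemma ball_norm_lt:
  fixes s y :: complex
  assumes "cmod s < \<rho>" "y \<in> ball s (\<rho> - cmod s)"
  shows "cmod y < \<rho>"
proof -
  have "cmod y \<le> cmod s + cmod (y - s)" by (metis add.commute diff_add_cancel norm_triangle_ineq)
  also have "cmod (y - s) < \<rho> - cmod s" using assms(2) by (simp add: dist_norm norm_minus_commute)
  finally show ?thesis by simp
qed

lemma curv:
  fixes f g h f' g' h' :: "complex \<Rightarrow> complex" and c d fpp :: complex
  assumes rho: "\<rho> > 0"
  and eq: "\<And>s t. cmod s < \<rho> \<Longrightarrow> cmod t < \<rho> \<Longrightarrow> Fp b1 b2 b3 b4 (f s) (g t) (h (c* s + d* t)) = 0"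
  and df: "\<And>s. cmod s < \<rho> \<Longrightarrow> (f has_field_derivative f' s) (at s)"
  and dg: "\<And>t. cmod t < \<rho> \<Longrightarrow> (g has_field_derivative g' t) (at t)"
  and dh: "\<And>s t. cmod s < \<rho> \<Longrightarrow> cmod t < \<rho> \<Longrightarrow> (h has_field_derivative h' (c* s+d* t)) (at (c* s+d* t))"
  and ddf: "(f' has_field_derivative fpp) (at 0)"
  and nz: "d \<noteq> 0" "f' 0 \<noteq> 0" "g' 0 \<noteq> 0"
  shows "Numc b1 b2 b3 (f 0) (g 0) (h 0) = 0"
proof -
  have dhs: "((\<lambda>\<sigma>. h (c* \<sigma> + d* t)) has_field_derivative h' (c* s+d* t) * c) (at s)"
    if "cmod s < \<rho>" "cmod t < \<rho>" for s t
  proof -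
    have "((\<lambda>\<sigma>. c* \<sigma> + d* t) has_field_derivative c) (at s)"
      by (rule derivative_eq_intros refl)+ simp
    from DERIV_chain2[OF dh[OF that] this] show ?thesis .
  qed
  have dht: "((\<lambda>\<tau>. h (c* s + d* \<tau>)) has_field_derivative h' (c* s+d* t) * d) (at t)"
    if "cmod s < \<rho>" "cmod t < \<rho>" for s t
  proof -
    have "((\<lambda>\<tau>. c* s + d* \<tau>) has_field_derivative d) (at t)"
      by (rule derivative_eq_intros refl)+ simp
    from DERIV_chain2[OF dh[OF that] this] show ?thesis .
  qed
  have e1: "P1 b1 (f s) (g t) (h (c* s+d* t)) * f' s + P3 b3 (f s) (g t) (h (c* s+d* t)) * (h' (c* s+d* t) * c) = 0"
    if "cmod s < \<rho>" "cmod t < \<rho>" for s t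
  proof -
    have D: "((\<lambda>\<sigma>. Fp b1 b2 b3 b4 (f \<sigma>) (g t) (h (c* \<sigma>+d* t))) has_field_derivative
       (P1 b1 (f s) (g t) (h (c* s+d* t)) * f' s + P2 b2 (f s) (g t) (h (c* s+d* t)) * 0
        + P3 b3 (f s) (g t) (h (c* s+d* t)) * (h' (c* s+d* t) * c))) (at s)"
      by (rule Fp_deriv[OF df[OF that(1)] DERIV_const dhs[OF that]])
    have "P1 b1 (f s) (g t) (h (c* s+d* t)) * f' s + P2 b2 (f s) (g t) (h (c* s+d* t)) * 0
        + P3 b3 (f s) (g t) (h (c* s+d* t)) * (h' (c* s+d* t) * c) = 0"
      by (rule deriv_zero_local[OF D, of "\<rho> - cmod s"]) (use that eq ball_norm_lt in auto)
    then show ?thesis by simp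
  qed
  have e2: "P2 b2 (f s) (g t) (h (c* s+d* t)) * g' t + P3 b3 (f s) (g t) (h (c* s+d* t)) * (h' (c* s+d* t) * d) = 0"
    if "cmod s < \<rho>" "cmod t < \<rho>" for s t
  proof -
    have D: "((\<lambda>\<tau>. Fp b1 b2 b3 b4 (f s) (g \<tau>) (h (c* s+d* \<tau>))) has_field_derivative
       (P1 b1 (f s) (g t) (h (c* s+d* t)) * 0 + P2 b2 (f s) (g t) (h (c* s+d* t)) * g' t
        + P3 b3 (f s) (g t) (h (c* s+d* t)) * (h' (c* s+d* t) * d))) (at t)"
      by (rule Fp_deriv[OF DERIV_const dg[OF that(2)] dht[OF that]])
    have "P1 b1 (f s) (g t) (h (c* s+d* t)) * 0 + P2 b2 (f s) (g t) (h (c* s+d* t)) * g' t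
        + P3 b3 (f s) (g t) (h (c* s+d* t)) * (h' (c* s+d* t) * d) = 0"
      by (rule deriv_zero_local[OF D, of "\<rho> - cmod t"]) (use that eq ball_norm_lt in auto)
    then show ?thesis by simp
  qed
  have e5: "Mf b1 b2 b3 (f 0) (g t) (h (d* t)) * fpp + (f' 0)^2 * Nf b1 b2 b3 (f 0) (g t) (h (d* t)) = 0"
    if t: "cmod t < \<rho>" for t
  proof -
    have e3: "d * P1 b1 (f s) (g t) (h (c* s+d* t)) * f' s - c * P2 b2 (f s) (g t) (h (c* s+d* t)) * g' t = 0"
      if "cmod s < \<rho>" for s
    proof -
      have "d * (P1 b1 (f s) (g t) (h (c* s+d* t)) * f' s + P3 b3 (f s) (g t) (h (c* s+d* t)) * (h' (c* s+d* t) * c))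
          - c * (P2 b2 (f s) (g t) (h (c* s+d* t)) * g' t + P3 b3 (f s) (g t) (h (c* s+d* t)) * (h' (c* s+d* t) * d)) = 0"
        using e1[OF that t] e2[OF that t] by simp
      then show ?thesis by (simp add: algebra_simps)
    qed
    have r0: "cmod (0::complex) < \<rho>" using rho by simp
    have dP1: "((\<lambda>\<sigma>. P1 b1 (f \<sigma>) (g t) (h (c* \<sigma>+d* t))) has_field_derivative
        (2 * f' 0 + 0 * h (c*0+d* t) + g t * (h' (c*0+d* t) * c))) (at 0)"
      by (rule P1_deriv[OF df[OF r0] DERIV_const dhs[OF r0 t]])
    have dP2: "((\<lambda>\<sigma>. P2 b2 (f \<sigma>) (g t) (h (c* \<sigma>+d* t))) has_field_derivative
        (2 * 0 + f' 0 * h (c*0+d* t) + f 0 * (h' (c*0+d* t) * c))) (at 0)"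
      by (rule P2_deriv[OF df[OF r0] DERIV_const dhs[OF r0 t]])
    have D: "((\<lambda>\<sigma>. d * P1 b1 (f \<sigma>) (g t) (h (c* \<sigma>+d* t)) * f' \<sigma> - c * P2 b2 (f \<sigma>) (g t) (h (c* \<sigma>+d* t)) * g' t)
       has_field_derivative
        (d * ((2 * f' 0 + 0 * h (c*0+d* t) + g t * (h' (c*0+d* t) * c)) * f' 0 + P1 b1 (f 0) (g t) (h (c*0+d* t)) * fpp)
         - c * ((2 * 0 + f' 0 * h (c*0+d* t) + f 0 * (h' (c*0+d* t) * c)) * g' t))) (at 0)"
      apply (rule derivative_eq_intros dP1 dP2 ddf refl)+
      apply (simp add: algebra_simps)
      done
    have D0: "d * ((2 * f' 0 + 0 * h (c*0+d* t) + g t * (h' (c*0+d* t) * c)) * f' 0 + P1 b1 (f 0) (g t) (h (c*0+d* t)) * fpp)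
         - c * ((2 * 0 + f' 0 * h (c*0+d* t) + f 0 * (h' (c*0+d* t) * c)) * g' t) = 0"
      by (rule deriv_zero_local[OF D, of \<rho>]) (use rho e3 in \<open>auto simp: dist_norm\<close>)
    have E1: "P1 b1 (f 0) (g t) (h (d* t)) * f' 0 + P3 b3 (f 0) (g t) (h (d* t)) * (h' (d* t) * c) = 0"
      using e1[OF r0 t] by simp
    have E2: "P2 b2 (f 0) (g t) (h (d* t)) * g' t + P3 b3 (f 0) (g t) (h (d* t)) * (h' (d* t) * d) = 0"
      using e2[OF r0 t] by simp
    have E4: "d * ((2 * f' 0 + g t * (h' (d* t) * c)) * f' 0 + P1 b1 (f 0) (g t) (h (d* t)) * fpp)
         - c * ((f' 0 * h (d* t) + f 0 * (h' (d* t) * c)) * g' t) = 0"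
      using D0 by simp
    have "d * (Mf b1 b2 b3 (f 0) (g t) (h (d* t)) * fpp + (f' 0)^2 * Nf b1 b2 b3 (f 0) (g t) (h (d* t))) = 0"
      using E1 E2 E4 unfolding Mf_def Nf_def Let_def P1_def P2_def P3_def by algebra
    then show ?thesis using nz(1) by simp
  qed
  have r0: "cmod (0::complex) < \<rho>" using rho by simp
  have dw: "((\<lambda>\<tau>. h (d* \<tau>)) has_field_derivative h' 0 * d) (at 0)"
    using dht[OF r0 r0] by simp
  have DM: "((\<lambda>\<tau>. Mf b1 b2 b3 (f 0) (g \<tau>) (h (d* \<tau>)) * fpp + (f' 0)^2 * Nf b1 b2 b3 (f 0) (g \<tau>) (h (d* \<tau>)))
     has_field_derivative
     ((M2f b1 b2 b3 (f 0) (g 0) (h 0) * g' 0 + M3f b1 b2 b3 (f 0) (g 0) (h 0) * (h' 0 * d)) * fpp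
      + (f' 0)^2 * (N2f b1 b2 b3 (f 0) (g 0) (h 0) * g' 0 + N3f b1 b2 b3 (f 0) (g 0) (h 0) * (h' 0 * d)))) (at 0)"
    using Mf_deriv[OF dg[OF r0] dw, of b1 b2 b3 "f 0"] Nf_deriv[OF dg[OF r0] dw, of b1 b2 b3 "f 0"]
    by (auto intro!: derivative_eq_intros)
  have E1: "(M2f b1 b2 b3 (f 0) (g 0) (h 0) * g' 0 + M3f b1 b2 b3 (f 0) (g 0) (h 0) * (h' 0 * d)) * fpp
      + (f' 0)^2 * (N2f b1 b2 b3 (f 0) (g 0) (h 0) * g' 0 + N3f b1 b2 b3 (f 0) (g 0) (h 0) * (h' 0 * d)) = 0"
    by (rule deriv_zero_local[OF DM, of \<rho>]) (use rho e5 in \<open>auto simp: dist_norm\<close>)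
  have E2: "P2 b2 (f 0) (g 0) (h 0) * g' 0 + P3 b3 (f 0) (g 0) (h 0) * (h' 0 * d) = 0"
    using e2[OF r0 r0] by simp
  have E3: "Mf b1 b2 b3 (f 0) (g 0) (h 0) * fpp + (f' 0)^2 * Nf b1 b2 b3 (f 0) (g 0) (h 0) = 0"
    using e5[OF r0] by simp
  have "(f' 0)^2 * g' 0 * Numc b1 b2 b3 (f 0) (g 0) (h 0) = 0"
    unfolding Numc_eq using E1 E2 E3 by algebra
  then show ?thesis using nz by simp
qed



lemma norm_smult_vec: "norm (h *s (w::complex^'n)) = cmod h * norm w"
proof -
  have "(\<lambda>i. norm ((h *s w)$i)) = (\<lambda>i. cmod h * norm (w$i))"
    by (simp add: norm_mult)
  then show ?thesis unfolding norm_vec_def by (simp add: L2_set_right_distrib)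
qed

lemma bounded_linear_smult_vec: "bounded_linear (\<lambda>h::complex. h *s (w::complex^'n))"
proof (rule bounded_linear_intro[where K="norm w"])
  show "(x + y) *s w = x *s w + y *s w" for x y :: complex by (rule vector_sadd_rdistrib)
  show "(r *\<^sub>R x) *s w = r *\<^sub>R (x *s w)" for r and x :: complex
    by (simp add: vec_eq_iff vector_scaleR_component)
  show "norm (x *s w) \<le> norm x * norm w" for x :: complex by (simp add: norm_smult_vec)
qed

lemma line_deriv:
  assumes hm: "holo_map psi Dpsi V" and zin: "z + x *s w \<in> V"
  shows "((\<lambda>\<tau>. (psi (z + \<tau> *s w)) $ m) has_field_derivative (Dpsi (z + x *s w) w) $ m) (at x)"
proof -
  have hd: "(psi has_derivative Dpsi (z + x *s w)) (at (z + x *s w))"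
   and cl: "\<And>c w'. Dpsi (z + x *s w) (c *s w') = c *s Dpsi (z + x *s w) w'"
    using hm zin unfolding holo_map_def by auto
  have "((\<lambda>\<tau>. z + \<tau> *s w) has_derivative (\<lambda>h. h *s w)) (at x)"
    using bounded_linear_imp_has_derivative[OF bounded_linear_smult_vec[of w]]
    by (intro derivative_eq_intros) auto
  from diff_chain_at[OF this hd] have
    "((\<lambda>\<tau>. psi (z + \<tau> *s w)) has_derivative (\<lambda>h. Dpsi (z + x *s w) (h *s w))) (at x)"
    by (simp add: o_def)
  from has_derivative_vec_nth[OF this, of m] have
    "((\<lambda>\<tau>. psi (z + \<tau> *s w) $ m) has_derivative (\<lambda>h. Dpsi (z + x *s w) (h *s w) $ m)) (at x)" .
  moreover have "(\<lambda>h. Dpsi (z + x *s w) (h *s w) $ m) = (*) (Dpsi (z + x *s w) w $ m)"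
    by (rule ext) (simp add: cl mult.commute)
  ultimately show ?thesis by (simp add: has_field_derivative_def)
qed

lemma deriv_zero_open:
  assumes "(f has_derivative f') (at x)" "open S" "x \<in> S" "\<And>y. y \<in> S \<Longrightarrow> f y = 0"
  shows "f' = (\<lambda>_. 0)"
proof -
  have "((\<lambda>_. 0) has_derivative f') (at x)"
    by (rule has_derivative_transform_within_open[OF assms(1) assms(2) assms(3)]) (use assms(4) in auto)
  then show ?thesis by (rule Deriv.has_derivative_zero_unique)
qed


lemma const_on_ball:
  fixes q :: "complex \<Rightarrow> complex"
  assumes "\<And>\<tau>. cmod \<tau> < r \<Longrightarrow> (q has_field_derivative 0) (at \<tau>)" "cmod x < r" "cmod y < r"
  shows "q x = q y"
proof -
  have "\<exists>c. \<forall>x\<in>ball 0 r. q x = c"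
    by (rule has_field_derivative_zero_constant[OF convex_ball])
       (use assms(1) in \<open>auto intro: has_field_derivative_at_within\<close>)
  then show ?thesis using assms(2,3) by auto
qed

lemma chart:
  fixes i j k :: 3
  assumes reg: "web_regular a p" and lp: "locally_parallelizable_at a p"
    and ijk: "i \<noteq> j" "i \<noteq> k" "j \<noteq> k"
  obtains \<rho> f g h c d f' g' h' f2 where "\<rho> > 0"
     "\<And>s t. cmod s < \<rho> \<Longrightarrow> cmod t < \<rho> \<Longrightarrow> Fp (ac a i) (ac a j) (ac a k) (a$4) (f s) (g t) (h (c * s + d * t)) = 0"
     "\<And>s. cmod s < \<rho> \<Longrightarrow> (f has_field_derivative f' s) (at s)"
     "\<And>t. cmod t < \<rho> \<Longrightarrow> (g has_field_derivative g' t) (at t)"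
     "\<And>s t. cmod s < \<rho> \<Longrightarrow> cmod t < \<rho> \<Longrightarrow> (h has_field_derivative h' (c * s + d * t)) (at (c * s + d * t))"
     "(f' has_field_derivative f2) (at 0)" "d \<noteq> 0" "f' 0 \<noteq> 0" "g' 0 \<noteq> 0"
     "f 0 = p$i" "g 0 = p$j" "h 0 = p$k"
proof -
  obtain V N psi phi Dpsi where N: "open N" "p \<in> N" and hm: "holo_map psi Dpsi V"
    and hom: "homeomorphism V (Sa a \<inter> N) psi phi" and inj: "\<forall>z\<in>V. inj (Dpsi z)"
    and par: "\<forall>m::3. \<exists>\<alpha> \<beta>::complex. (\<alpha>, \<beta>) \<noteq> (0, 0) \<and>
                 (\<forall>z\<in>V. {w. (Dpsi z w)$m = 0} = {w. \<alpha> * w$1 + \<beta> * w$2 = 0})"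
    using lp unfolding locally_parallelizable_at_def by blast
  from par have "\<exists>AB. \<forall>m::3. (fst (AB m), snd (AB m)) \<noteq> (0::complex, 0::complex) \<and>
      (\<forall>z\<in>V. {w. (Dpsi z w)$m = 0} = {w. fst (AB m) * w$1 + snd (AB m) * w$2 = 0})"
    by (intro choice) auto
  then obtain AB where AB: "\<And>m::3. (fst (AB m), snd (AB m)) \<noteq> (0::complex, 0::complex)"
    "\<And>m z. z \<in> V \<Longrightarrow> {w. (Dpsi z w)$m = 0} = {w. fst (AB m) * w$1 + snd (AB m) * w$2 = 0}"
    by blast
  define al where "al m = fst (AB m)" for m
  define be where "be m = snd (AB m)" for m
  define ell where "ell m w = al m * w$1 + be m * w$2" for m and w :: "complex^2"
  have albe: "(al m, be m) \<noteq> (0,0)" for m using AB(1) by (simp add: al_def be_def)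
  have ker: "(Dpsi z w)$m = 0 \<longleftrightarrow> ell m w = 0" if "z \<in> V" for z w m
    using AB(2)[OF that, of m] by (auto simp: ell_def al_def be_def set_eq_iff)
  have openV: "open V" and hd: "\<And>z. z \<in> V \<Longrightarrow> (psi has_derivative Dpsi z) (at z)"
    and cl: "\<And>z c w. z \<in> V \<Longrightarrow> Dpsi z (c *s w) = c *s Dpsi z w"
    using hm unfolding holo_map_def by auto
  have pS: "p \<in> Sa a" using reg by (simp add: web_regular_def smooth_pt_def)
  define z0 where "z0 = phi p"
  have z0V: "z0 \<in> V" and psiz0: "psi z0 = p"
    using hom pS N(2) unfolding homeomorphism_def z0_def by auto
  have psiV: "Fa a (psi z) = 0" if "z \<in> V" for z
  proof -
    have "psi z \<in> Sa a" using hom that unfolding homeomorphism_def by auto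
    then show ?thesis by (simp add: Sa_def)
  qed
  have lin: "linear (Dpsi z)" if "z \<in> V" for z
    using hd[OF that] has_derivative_linear by blast
  have tang: "FD a p (Dpsi z0 w) = 0" for w
  proof -
    have "((\<lambda>z. Fa a (psi z)) has_derivative (FD a (psi z0) \<circ> Dpsi z0)) (at z0)"
      using diff_chain_at[OF hd[OF z0V] Fa_has_derivative[of a "psi z0"]] by (simp add: o_def)
    from deriv_zero_open[OF this openV z0V psiV] have "FD a p \<circ> Dpsi z0 = (\<lambda>_. 0)"
      by (simp add: psiz0)
    then show ?thesis by (metis comp_apply)
  qed
  have pair: "w = 0" if "m \<noteq> n" "ell m w = 0" "ell n w = 0" for m n w
  proof -
    have t: "Dpsi z0 w \<in> tangent_plane a p" using tang by (simp add: tangent_plane_def frechet_Fa)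
    have "(Dpsi z0 w)$m = 0" "(Dpsi z0 w)$n = 0" using ker[OF z0V] that by auto
    then have "Dpsi z0 w = 0" using reg t that(1) unfolding web_regular_def by blast
    moreover have "Dpsi z0 0 = 0" using lin[OF z0V] by (simp add: linear_0)
    ultimately show ?thesis using inj z0V by (metis injD)
  qed
  define Dl where "Dl = al i * be j - al j * be i"
  have D0: "Dl \<noteq> 0"
  proof
    assume "Dl = 0"
    define w :: "complex^2" where "w = vector [- be i, al i]"
    have "ell i w = 0" "ell j w = 0" using \<open>Dl = 0\<close>
      by (simp_all add: ell_def w_def Dl_def algebra_simps)
    then have "w = 0" using pair ijk(1) by blast
    then have "al i = 0" "be i = 0" unfolding w_def by (metis neg_equal_0_iff_equal vector_2 zero_index)+
    then show False using albe[of i] by simp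
  qed
  define u :: "complex^2" where "u = vector [be j / Dl, - al j / Dl]"
  define v :: "complex^2" where "v = vector [- be i / Dl, al i / Dl]"
  have lu: "ell i u = 1" "ell j u = 0" and lv: "ell i v = 0" "ell j v = 1"
    using D0 by (simp_all add: ell_def u_def v_def field_simps) (simp_all add: Dl_def algebra_simps)
  define c where "c = ell k u"
  define d where "d = ell k v"
  have d0: "d \<noteq> 0"
  proof
    assume "d = 0"
    then have "v = 0" using pair[of i k v] ijk lv by (simp add: d_def)
    then show False using lv(2) by (simp add: ell_def)
  qed
  have c0: "c \<noteq> 0"
  proof
    assume "c = 0"
    then have "u = 0" using pair[of j k u] ijk lu by (simp add: c_def)
    then show False using lu(1) by (simp add: ell_def)
  qed
  obtain R where R: "R > 0" "ball z0 R \<subseteq> V" using openV z0V open_contains_ball by blast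
  define L where "L s t = z0 + s *s u + t *s v" for s t :: complex
  define K where "K = norm u + norm v + 1"
  define r0 where "r0 = R / K"
  have K0: "K > 0" by (simp add: K_def add_nonneg_pos)
  have r0pos: "r0 > 0" using R(1) K0 by (simp add: r0_def)
  have inV: "L s t \<in> V" if "cmod s < r0" "cmod t < r0" for s t
  proof -
    have "norm (s *s u + t *s v) \<le> cmod s * norm u + cmod t * norm v"
      using norm_triangle_ineq[of "s *s u" "t *s v"] by (simp add: norm_smult_vec)
    also have "\<dots> \<le> r0 * norm u + r0 * norm v"
      by (intro add_mono mult_right_mono) (use that in auto)
    also have "\<dots> < r0 * K" using r0pos by (simp add: K_def algebra_simps)
    also have "\<dots> = R" using K0 by (simp add: r0_def)
    finally have "norm (s *s u + t *s v) < R" .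
    moreover have "dist z0 (L s t) = norm (s *s u + t *s v)"
    proof -
      have "z0 - L s t = - (s *s u + t *s v)" by (simp add: L_def)
      then show ?thesis by (simp only: dist_norm norm_minus_cancel)
    qed
    ultimately have "dist z0 (L s t) < R" by simp
    then show ?thesis using R(2) by auto
  qed
  have L00: "L 0 0 = z0" by (simp add: L_def)
  have dYt: "((\<lambda>\<tau>. psi (L s \<tau>) $ m) has_field_derivative (Dpsi (L s t) v) $ m) (at t)"
    if "cmod s < r0" "cmod t < r0" for s t m
    using line_deriv[OF hm, of "z0 + s *s u" t v m] inV[OF that] unfolding L_def by simp
  have dYs: "((\<lambda>\<sigma>. psi (L \<sigma> t) $ m) has_field_derivative (Dpsi (L s t) u) $ m) (at s)"
    if "cmod s < r0" "cmod t < r0" for s t m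
  proof -
    have eqL: "L \<sigma> t = (z0 + t *s v) + \<sigma> *s u" for \<sigma> by (simp add: L_def add_ac)
    show ?thesis using line_deriv[OF hm, of "z0 + t *s v" s u m] inV[OF that] unfolding eqL by simp
  qed
  have lk0: "ell k (d *s u - c *s v) = 0"
    by (simp add: ell_def c_def d_def algebra_simps)
  have dY3: "((\<lambda>\<tau>. psi (L (s + \<tau> * d) (t - \<tau> * c)) $ k) has_field_derivative 0) (at \<tau>)"
    if "cmod (s + \<tau> * d) < r0" "cmod (t - \<tau> * c) < r0" for s t \<tau>
  proof -
    have eq: "L (s + \<sigma> * d) (t - \<sigma> * c) = L s t + \<sigma> *s (d *s u - c *s v)" for \<sigma>
      by (simp add: L_def vec_eq_iff algebra_simps)
    have "L s t + \<tau> *s (d *s u - c *s v) \<in> V" using inV[OF that] eq by simp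
    from line_deriv[OF hm this, of k] have
      "((\<lambda>\<sigma>. psi (L s t + \<sigma> *s (d *s u - c *s v)) $ k) has_field_derivative
         Dpsi (L s t + \<tau> *s (d *s u - c *s v)) (d *s u - c *s v) $ k) (at \<tau>)" .
    moreover have "Dpsi (L s t + \<tau> *s (d *s u - c *s v)) (d *s u - c *s v) $ k = 0"
      using ker[OF \<open>L s t + \<tau> *s (d *s u - c *s v) \<in> V\<close>] lk0 by simp
    ultimately show ?thesis unfolding eq by simp
  qed
  have Yi: "psi (L s t) $ i = psi (L s 0) $ i" if "cmod s < r0" "cmod t < r0" for s t
  proof (rule const_on_ball[where r=r0 and q="\<lambda>\<tau>. psi (L s \<tau>) $ i"])
    fix \<tau> :: complex assume "cmod \<tau> < r0"
    have "Dpsi (L s \<tau>) v $ i = 0" using ker[OF inV[OF that(1) \<open>cmod \<tau> < r0\<close>], of v i] lv(1) by simp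
    with dYt[OF that(1) \<open>cmod \<tau> < r0\<close>, of i]
    show "((\<lambda>\<tau>. psi (L s \<tau>) $ i) has_field_derivative 0) (at \<tau>)" by simp
  qed (use that r0pos in auto)
  have Yj: "psi (L s t) $ j = psi (L 0 t) $ j" if "cmod s < r0" "cmod t < r0" for s t
  proof (rule const_on_ball[where r=r0 and q="\<lambda>\<sigma>. psi (L \<sigma> t) $ j"])
    fix \<sigma> :: complex assume "cmod \<sigma> < r0"
    have "Dpsi (L \<sigma> t) u $ j = 0" using ker[OF inV[OF \<open>cmod \<sigma> < r0\<close> that(2)], of u j] lu(2) by simp
    with dYs[OF \<open>cmod \<sigma> < r0\<close> that(2), of j]
    show "((\<lambda>\<sigma>. psi (L \<sigma> t) $ j) has_field_derivative 0) (at \<sigma>)" by simp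
  qed (use that r0pos in auto)
  define r' where "r' = r0 / (2 * (cmod c + cmod d + 1))"
  define \<rho> where "\<rho> = min (r0/2) (r' * cmod c)"
  have r'pos: "r' > 0" using r0pos by (simp add: r'_def add_nonneg_pos)
  have e: "r' * (cmod c + cmod d + 1) = r0/2"
  proof -
    have "cmod c + cmod d + 1 > 0" by (simp add: add_nonneg_pos)
    then show ?thesis by (simp add: r'_def field_simps)
  qed
  have r'c: "r' * cmod c \<le> r0/2"
  proof -
    have "r' * cmod c \<le> r' * (cmod c + cmod d + 1)" by (intro mult_left_mono) (use r'pos in auto)
    then show ?thesis using e by simp
  qed
  have r'd: "r' * cmod d \<le> r0/2"
  proof -
    have "r' * cmod d \<le> r' * (cmod c + cmod d + 1)" by (intro mult_left_mono) (use r'pos in auto)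
    then show ?thesis using e by simp
  qed
  have rhopos: "\<rho> > 0" using r0pos r'pos c0 by (simp add: \<rho>_def)
  have Yk: "psi (L s t) $ k = psi (L ((c * s + d * t) / c) 0) $ k" if "cmod s < \<rho>" "cmod t < \<rho>" for s t
  proof -
    have b: "cmod (s + \<tau> * d) < r0 \<and> cmod (t - \<tau> * c) < r0" if "cmod \<tau> < r'" for \<tau>
    proof -
      have "cmod (s + \<tau> * d) \<le> cmod s + cmod \<tau> * cmod d" by (metis norm_mult norm_triangle_ineq)
      also have "\<dots> < r0/2 + r' * cmod d"
        using \<open>cmod s < \<rho>\<close> that by (intro add_less_le_mono mult_right_mono) (auto simp: \<rho>_def)
      also have "\<dots> \<le> r0" using r'd by simp
      finally have 1: "cmod (s + \<tau> * d) < r0" .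
      have "cmod (t - \<tau> * c) \<le> cmod t + cmod \<tau> * cmod c" by (metis norm_mult norm_triangle_ineq4)
      also have "\<dots> < r0/2 + r' * cmod c"
        using \<open>cmod t < \<rho>\<close> that by (intro add_less_le_mono mult_right_mono) (auto simp: \<rho>_def)
      also have "\<dots> \<le> r0" using r'c by simp
      finally show ?thesis using 1 by simp
    qed
    have tc: "cmod (t / c) < r'"
      using \<open>cmod t < \<rho>\<close> c0 by (simp add: \<rho>_def norm_divide divide_less_eq)
    have "psi (L (s + 0 * d) (t - 0 * c)) $ k = psi (L (s + (t/c) * d) (t - (t/c) * c)) $ k"
      by (rule const_on_ball[where r=r' and q="\<lambda>\<tau>. psi (L (s + \<tau> * d) (t - \<tau> * c)) $ k"])
         (use b dY3 tc r'pos in auto)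
    moreover have "s + (t/c) * d = (c * s + d * t) / c" "t - (t/c) * c = 0" using c0 by (auto simp: field_simps)
    ultimately show ?thesis by simp
  qed
  have rho_r0: "\<rho> < r0" using r0pos by (simp add: \<rho>_def)
  have r00: "cmod (0::complex) < r0" using r0pos by simp
  define f where "f s = psi (L s 0) $ i" for s
  define g where "g t = psi (L 0 t) $ j" for t
  define h where "h w = psi (L (w / c) 0) $ k" for w
  define g' where "g' t = Dpsi (L 0 t) v $ j" for t
  define h' where "h' w = Dpsi (L (w / c) 0) u $ k * (1 / c)" for w
  have df0: "(f has_field_derivative (Dpsi (L s 0) u) $ i) (at s)" if "cmod s < r0" for s
    using dYs[OF that r00, of i] unfolding f_def .
  have holf: "f holomorphic_on ball 0 r0"
    using df0 by (subst holomorphic_on_open[OF open_ball]) (auto simp: dist_norm intro!: exI)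
  have df: "(f has_field_derivative deriv f s) (at s)" if "cmod s < r0" for s
    using df0[OF that] DERIV_imp_deriv by metis
  have ddf: "(deriv f has_field_derivative deriv (deriv f) 0) (at 0)"
  proof -
    have "deriv f holomorphic_on ball 0 r0" by (rule holomorphic_deriv[OF holf open_ball])
    then have "deriv f field_differentiable at 0"
      using holomorphic_on_imp_differentiable_at[OF _ open_ball] r0pos by auto
    then show ?thesis using DERIV_deriv_iff_field_differentiable by blast
  qed
  have f'0: "deriv f 0 \<noteq> 0"
  proof -
    have "deriv f 0 = Dpsi z0 u $ i" using DERIV_imp_deriv[OF df0[OF r00]] L00 by simp
    moreover have "Dpsi z0 u $ i \<noteq> 0" using ker[OF z0V, of u i] lu(1) by simp
    ultimately show ?thesis by simp
  qed
  have dg: "(g has_field_derivative g' t) (at t)" if "cmod t < r0" for t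
    using dYt[OF r00 that, of j] unfolding g_def g'_def .
  have g'0: "g' 0 \<noteq> 0"
    using ker[OF z0V, of v j] lv(2) L00 by (simp add: g'_def)
  have wc: "cmod ((c * s + d * t) / c) < r0" if "cmod s < \<rho>" "cmod t < \<rho>" for s t
  proof -
    have tc: "cmod t / cmod c < r'"
      using that(2) c0 by (simp add: \<rho>_def divide_less_eq)
    have "(c * s + d * t) / c = s + d * (t / c)" using c0 by (simp add: field_simps)
    then have "cmod ((c * s + d * t) / c) \<le> cmod s + cmod d * (cmod t / cmod c)"
      by (metis norm_divide norm_mult norm_triangle_ineq)
    also have "\<dots> < r0/2 + cmod d * r'"
      using that(1) tc by (intro add_less_le_mono mult_left_mono) (auto simp: \<rho>_def)
    also have "\<dots> \<le> r0" using r'd by (simp add: mult.commute)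
    finally show ?thesis .
  qed
  have dh: "(h has_field_derivative h' (c * s + d * t)) (at (c * s + d * t))"
    if "cmod s < \<rho>" "cmod t < \<rho>" for s t
  proof -
    have "((\<lambda>w. w / c) has_field_derivative 1 / c) (at (c * s + d * t))"
      using DERIV_cdivide[OF DERIV_ident, where c=c and x="c * s + d * t" and s=UNIV] by simp
    from DERIV_chain2[OF dYs[OF wc[OF that] r00, of k] this]
    show ?thesis unfolding h_def h'_def .
  qed
  have feq: "Fp (ac a i) (ac a j) (ac a k) (a$4) (f s) (g t) (h (c * s + d * t)) = 0"
    if "cmod s < \<rho>" "cmod t < \<rho>" for s t
  proof -
    have st: "cmod s < r0" "cmod t < r0" using that rho_r0 by auto
    have "Fa a (psi (L s t)) = 0" using psiV[OF inV[OF st]] .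
    then have "Fp (ac a 1) (ac a 2) (ac a 3) (a$4) (psi (L s t) $ 1) (psi (L s t) $ 2) (psi (L s t) $ 3) = 0"
      by (simp add: Fa_Fp)
    then have "Fp (ac a i) (ac a j) (ac a k) (a$4) (psi (L s t) $ i) (psi (L s t) $ j) (psi (L s t) $ k) = 0"
      using Fp_perm[OF ijk, of "ac a"] by simp
    then show ?thesis using Yi[OF st] Yj[OF st] Yk[OF that] by (simp add: f_def g_def h_def)
  qed
  have f0: "f 0 = p$i" and g0: "g 0 = p$j" and h0: "h 0 = p$k"
    using L00 psiz0 by (simp_all add: f_def g_def h_def)
  have df': "(f has_field_derivative deriv f s) (at s)" if "cmod s < \<rho>" for s
    using df that rho_r0 by auto
  have dg': "(g has_field_derivative g' t) (at t)" if "cmod t < \<rho>" for t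
    using dg that rho_r0 by auto
  show thesis
    by (rule that[OF rhopos feq df' dg' dh ddf d0 f'0 g'0 f0 g0 h0])
qed



lemma NumS: "Numc b1 b2 b3 2 x (s - x) = (- 32) * x^5 * s^3 + (16 * b2 - 16 * b3) * x^6 * s^1 + (80) * x^4 * s^4 + (- 24 * b2 + 72 * b3) * x^5 * s^2 + (- 4 * b2^2 + 4 * b3^2) * x^6 * s^0 + (- 64) * x^3 * s^5 + (- 120 * b3) * x^4 * s^3 + (- 24 * b3^2) * x^5 * s^1 + (16) * x^2 * s^6 + (8 * b2 + 88 * b3) * x^3 * s^4 + (12 * b2^2 + 48 * b3^2) * x^4 * s^2 + (2 * b2^3 + 2 * b3^3) * x^5 * s^0 + (- 24 * b3) * x^2 * s^5 + (- 64 * b1 - 8 * b2^2 - 40 * b3^2 + 256) * x^3 * s^3 + (48 * b1 * b2 - 48 * b1 * b3 - 4 * b2^3 - 192 * b2 - 6 * b3^3 + 192 * b3) * x^4 * s^1 + (96 * b1 + 12 * b3^2 - 384) * x^2 * s^4 + (- 48 * b1 * b2 + 144 * b1 * b3 + 2 * b2^3 + 192 * b2 + 6 * b3^3 - 576 * b3) * x^3 * s^2 + (- 12 * b1 * b2^2 + 12 * b1 * b3^2 + 48 * b2^2 - 48 * b3^2) * x^4 * s^0 + (- 32 * b1 + 256) * x^1 * s^5 + (- 144 * b1 * b3 - 2 * b3^3 + 576 * b3) * x^2 * s^3 + (- 48 * b1 * b3^2 + 192 * b3^2) * x^3 * s^1 + (- 64) * x^0 * s^6 + (48 * b1 * b3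 - 160 * b2 - 352 * b3) * x^1 * s^4 + (12 * b1 * b2^2 + 60 * b1 * b3^2 - 48 * b2^2 - 240 * b3^2) * x^2 * s^2 + (4 * b1 * b2^3 + 4 * b1 * b3^3 - 16 * b2^3 - 16 * b3^3) * x^3 * s^0 + (64 * b2 + 96 * b3) * x^0 * s^5 + (- 32 * b1^2 - 24 * b1 * b3^2 + 256 * b1 + 64 * b2^2 + 192 * b2 * b3 + 160 * b3^2 - 512) * x^1 * s^3 + (48 * b1^2 * b2 - 48 * b1^2 * b3 - 4 * b1 * b2^3 - 384 * b1 * b2 - 8 * b1 * b3^3 + 384 * b1 * b3 + 16 * b2^3 + 768 * b2 + 32 * b3^3 - 768 * b3) * x^2 * s^1 + (16 * b1^2 - 128 * b1 - 16 * b2^2 - 96 * b2 * b3 - 48 * b3^2 + 256) * x^0 * s^4 + (- 24 * b1^2 * b2 + 72 * b1^2 * b3 + 192 * b1 * b2 + 4 * b1 * b3^3 - 576 * b1 * b3 - 8 * b2^3 - 72 * b2^2 * b3 - 72 * b2 * b3^2 - 384 * b2 - 24 * b3^3 + 1152 * b3) * x^1 * s^2 + (- 12 * b1^2 * b2^2 + 12 * b1^2 * b3^2 + 96 * b1 * b2^2 - 96 * b1 * b3^2 - 192 * b2^2 + 192 * b3^2) * x^2 * s^0 + (- 24 * b1^2 * b3 + 192 * b1 * b3 + 24 * b2^2 * b3 + 48 * b2 * b3^2 + 8 * b3^3 - 384 * b3) * x^0 * s^3 + (- 24 * b1^2 * b3^2 + 192 * b1 * b3^2 + 8 * b2^3 *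 b3 + 24 * b2^2 * b3^2 + 8 * b2 * b3^3 - 384 * b3^2) * x^1 * s^1 + (12 * b1^2 * b3^2 - 96 * b1 * b3^2 - 12 * b2^2 * b3^2 - 8 * b2 * b3^3 + 192 * b3^2) * x^0 * s^2 + (2 * b1^2 * b2^3 + 2 * b1^2 * b3^3 - 16 * b1 * b2^3 - 16 * b1 * b3^3 - 2 * b2^3 * b3^2 + 32 * b2^3 - 2 * b2^2 * b3^3 + 32 * b3^3) * x^1 * s^0 + (16 * b1^3 * b2 - 16 * b1^3 * b3 - 192 * b1^2 * b2 - 2 * b1^2 * b3^3 + 192 * b1^2 * b3 + 768 * b1 * b2 + 16 * b1 * b3^3 - 768 * b1 * b3 + 2 * b2^2 * b3^3 - 1024 * b2 - 32 * b3^3 + 1024 * b3) * x^0 * s^1 + (- 4 * b1^3 * b2^2 + 4 * b1^3 * b3^2 + 48 * b1^2 * b2^2 - 48 * b1^2 * b3^2 - 192 * b1 * b2^2 + 192 * b1 * b3^2 + 256 * b2^2 - 256 * b3^2) * x^0 * s^0"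
  unfolding Numc_def Let_def by algebra

definition T :: "complex poly \<Rightarrow> complex \<Rightarrow> nat \<Rightarrow> nat \<Rightarrow> complex poly" where
  "T p c i j = smult c (p^i * monom 1 j)"

lemma poly_T: "poly (T p c i j) u = c * (poly p u)^i * u^j"
  by (simp add: T_def poly_monom)

lemma coeff_T:
  assumes "degree p = 2" "2*i+j \<le> n"
  shows "coeff (T p c i j) n = (if n = 2*i+j then c * lead_coeff p ^ i else 0)"
proof -
  have p0: "p \<noteq> 0" using assms(1) by auto
  have dg: "degree (p^i * monom 1 j) = 2*i+j"
    using p0 by (simp add: degree_mult_eq degree_power_eq assms(1) degree_monom_eq)
  show ?thesis
  proof (cases "n = 2*i+j")
    case True
    have "coeff (p^i * monom 1 j) (degree (p^i) + degree (monom (1::complex) j)) = lead_coeff p ^ i"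
      by (simp only: coeff_mult_degree_sum lead_coeff_power) (simp add: degree_monom_eq)
    moreover have "degree (p^i) + degree (monom (1::complex) j) = n"
      using True p0 by (simp add: degree_power_eq assms(1) degree_monom_eq)
    ultimately show ?thesis using True by (simp add: T_def)
  next
    case False
    then have "n > degree (p^i * monom 1 j)" using dg assms(2) by simp
    then show ?thesis using False by (simp add: T_def coeff_eq_0)
  qed
qed

definition pN :: "complex poly \<Rightarrow> complex \<Rightarrow> complex \<Rightarrow> complex \<Rightarrow> complex poly" where
  "pN p b1 b2 b3 = T p (- 32) 5 3 + T p (16 * b2 - 16 * b3) 6 1 + T p (80) 4 4 + T p (- 24 * b2 + 72 * b3) 5 2 + T p (- 4 * b2^2 + 4 * b3^2) 6 0 + T p (- 64) 3 5 + T p (- 120 * b3) 4 3 + T p (- 24 * b3^2) 5 1 + T p (16) 2 6 + T p (8 * b2 + 88 * b3) 3 4 + T p (12 * b2^2 + 48 * b3^2) 4 2 + T p (2 * b2^3 + 2 * b3^3) 5 0 + T p (- 24 * b3) 2 5 + T p (- 64 * b1 - 8 * b2^2 - 40 * b3^2 + 256) 3 3 + T p (48 * b1 * b2 - 48 * b1 * b3 - 4 * b2^3 - 192 * b2 - 6 * b3^3 + 192 * b3) 4 1 + T p (96 * b1 + 12 * b3^2 - 384) 2 4 + T p (- 48 * b1 * b2 + 144 * b1 * b3 + 2 * b2^3 + 192 * b2 + 6 * b3^3 - 576 * b3) 3 2 + T p (- 12 * b1 * b2^2 + 12 * b1 * b3^2 + 48 * b2^2 - 48 * b3^2) 4 0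 + T p (- 32 * b1 + 256) 1 5 + T p (- 144 * b1 * b3 - 2 * b3^3 + 576 * b3) 2 3 + T p (- 48 * b1 * b3^2 + 192 * b3^2) 3 1 + T p (- 64) 0 6 + T p (48 * b1 * b3 - 160 * b2 - 352 * b3) 1 4 + T p (12 * b1 * b2^2 + 60 * b1 * b3^2 - 48 * b2^2 - 240 * b3^2) 2 2 + T p (4 * b1 * b2^3 + 4 * b1 * b3^3 - 16 * b2^3 - 16 * b3^3) 3 0 + T p (64 * b2 + 96 * b3) 0 5 + T p (- 32 * b1^2 - 24 * b1 * b3^2 + 256 * b1 + 64 * b2^2 + 192 * b2 * b3 + 160 * b3^2 - 512) 1 3 + T p (48 * b1^2 * b2 - 48 * b1^2 * b3 - 4 * b1 * b2^3 - 384 * b1 * b2 - 8 * b1 * b3^3 + 384 * b1 * b3 + 16 * b2^3 + 768 * b2 + 32 * b3^3 - 768 * b3) 2 1 + T p (16 * b1^2 - 128 * b1 - 16 * b2^2 - 96 * b2 * b3 - 48 * b3^2 + 256) 0 4 + T p (- 24 * b1^2 * b2 + 72 * b1^2 * b3 + 192 * b1 * b2 + 4 * b1 * b3^3 - 576 * b1 * b3 - 8 * b2^3 - 72 * b2^2 * b3 - 72 * b2 * b3^2 - 384 * b2 - 24 * b3^3 + 1152 * b3) 1 2 + T p (- 12 * b1^2 * b2^2 + 12 * b1^2 * b3^2 + 96 * b1 * b2^2 - 96 * b1 * b3^2 - 192 * b2^2 + 192 * b3^2) 2 0 + T p (- 24 * b1^2 * b3 + 192 * b1 * b3 + 24 *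 b2^2 * b3 + 48 * b2 * b3^2 + 8 * b3^3 - 384 * b3) 0 3 + T p (- 24 * b1^2 * b3^2 + 192 * b1 * b3^2 + 8 * b2^3 * b3 + 24 * b2^2 * b3^2 + 8 * b2 * b3^3 - 384 * b3^2) 1 1 + T p (12 * b1^2 * b3^2 - 96 * b1 * b3^2 - 12 * b2^2 * b3^2 - 8 * b2 * b3^3 + 192 * b3^2) 0 2 + T p (2 * b1^2 * b2^3 + 2 * b1^2 * b3^3 - 16 * b1 * b2^3 - 16 * b1 * b3^3 - 2 * b2^3 * b3^2 + 32 * b2^3 - 2 * b2^2 * b3^3 + 32 * b3^3) 1 0 + T p (16 * b1^3 * b2 - 16 * b1^3 * b3 - 192 * b1^2 * b2 - 2 * b1^2 * b3^3 + 192 * b1^2 * b3 + 768 * b1 * b2 + 16 * b1 * b3^3 - 768 * b1 * b3 + 2 * b2^2 * b3^3 - 1024 * b2 - 32 * b3^3 + 1024 * b3) 0 1 + T p (- 4 * b1^3 * b2^2 + 4 * b1^3 * b3^2 + 48 * b1^2 * b2^2 - 48 * b1^2 * b3^2 - 192 * b1 * b2^2 + 192 * b1 * b3^2 + 256 * b2^2 - 256 * b3^2) 0 0"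

lemma poly_pN: "poly (pN p b1 b2 b3) u = Numc b1 b2 b3 2 (poly p u) (u - poly p u)"
  unfolding NumS pN_def by (simp add: poly_T)

lemma coeff_pN:
  assumes "degree p = 2"
  shows "coeff (pN p b1 b2 b3) 13 = 16 * (b2 - b3) * lead_coeff p ^ 6 - 32 * lead_coeff p ^ 5"
  unfolding pN_def by (simp add: coeff_T[OF assms] algebra_simps)


lemma exists_nonroot:
  fixes q :: "complex poly"
  assumes "q \<noteq> 0"
  obtains u where "poly q u \<noteq> 0"
proof -
  have "finite {x. poly q x = 0}" by (rule poly_roots_finite[OF assms])
  then have "\<exists>u. u \<notin> {x. poly q x = 0}"
    using infinite_UNIV_char_0 ex_new_if_finite by blast
  then show ?thesis using that by blast
qed

lemma slice:
  assumes "b2 \<noteq> b3"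
  shows "\<exists>y1 y2 y3. Fp b1 b2 b3 b4 y1 y2 y3 = 0 \<and> P1 b1 y1 y2 y3 \<noteq> 0 \<and> P2 b2 y1 y2 y3 \<noteq> 0
     \<and> P3 b3 y1 y2 y3 \<noteq> 0 \<and> Numc b1 b2 b3 y1 y2 y3 \<noteq> 0"
proof -
  define \<delta> where "\<delta> = b2 - b3"
  define C where "C = 4 - 2 * b1 - b4"
  define p where "p = smult (1/\<delta>) [:C, -b3, 1:]"
  have d0: "\<delta> \<noteq> 0" using assms by (simp add: \<delta>_def)
  have dp: "degree p = 2" using d0 by (simp add: p_def)
  have lp: "lead_coeff p = 1/\<delta>" using d0 dp by (simp add: p_def)
  have "coeff (pN p b1 b2 b3) 13 = - 16 / \<delta>^5"
    unfolding coeff_pN[OF dp] lp using d0 by (simp add: \<delta>_def[symmetric] field_simps) (simp add: power_Suc[symmetric])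
  then have pN0: "pN p b1 b2 b3 \<noteq> 0" using d0 by auto
  define q1 where "q1 = [:4 - b1:] + T p 1 1 1 - T p 1 2 0"
  have "coeff q1 4 = -1 / \<delta>^2"
    unfolding q1_def by (simp add: coeff_T[OF dp] lp numeral_eq_Suc power_one_over)
  then have q10: "q1 \<noteq> 0" using d0 by auto
  define q where "q = pN p b1 b2 b3 * q1 * [:-b2, 2:] * [:-b3, 2:]"
  have "q \<noteq> 0" unfolding q_def using pN0 q10 by (intro no_zero_divisors) auto
  then obtain u where u: "poly q u \<noteq> 0" by (rule exists_nonroot)
  define y2 where "y2 = poly p u"
  have y2: "\<delta> * y2 = u^2 - b3 * u + C"
    using d0 by (simp add: y2_def p_def power2_eq_square algebra_simps)
  have "Fp b1 b2 b3 b4 2 y2 (u - y2) = 0"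
  proof -
    have "Fp b1 b2 b3 b4 2 y2 (u - y2) = u^2 - b3 * u + C - \<delta> * y2"
      by (simp add: Fp_def C_def \<delta>_def power2_eq_square algebra_simps)
    then show ?thesis using y2 by simp
  qed
  moreover have "P1 b1 2 y2 (u - y2) = poly q1 u"
    by (simp add: q1_def P1_def poly_T y2_def power2_eq_square algebra_simps)
  moreover have "P2 b2 2 y2 (u - y2) = poly [:-b2, 2:] u"
    by (simp add: P2_def algebra_simps)
  moreover have "P3 b3 2 y2 (u - y2) = poly [:-b3, 2:] u"
    by (simp add: P3_def algebra_simps)
  moreover have "Numc b1 b2 b3 2 y2 (u - y2) = poly (pN p b1 b2 b3) u"
    by (simp add: poly_pN y2_def)
  ultimately show ?thesis using u unfolding q_def by (intro exI[of _ 2] exI[of _ y2] exI[of _ "u - y2"]) auto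
qed


lemma Num0: "Numc 0 0 0 y1 y2 y3 = 16 * (y1^2 + y2^2 + y3^2 + y1 * y2 * y3 - 4) * (y1^2 - y2^2) * (y2^2 - y3^2) * (y3^2 - y1^2)"
  unfolding Numc_def Let_def by algebra

lemma zero_case:
  assumes "b4 \<noteq> 4"
  shows "\<exists>y1 y2 y3. Fp 0 0 0 b4 y1 y2 y3 = 0 \<and> P1 0 y1 y2 y3 \<noteq> 0 \<and> P2 0 y1 y2 y3 \<noteq> 0
     \<and> P3 0 y1 y2 y3 \<noteq> 0 \<and> Numc 0 0 0 y1 y2 y3 \<noteq> 0"
proof -
  define m where "m = csqrt (b4 - 4)"
  have m2: "m^2 = b4 - 4" by (simp add: m_def)
  have m0: "m \<noteq> 0" using m2 assms by auto
  define q where "q = [:4, m, -1:] * [:4, 0, -1:] * [:-(m^2), 2*m:] * [:m^2 - 4, -2*m, 1:]"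
  have "q \<noteq> 0" unfolding q_def using m0 by (intro no_zero_divisors) auto
  then obtain u where u: "poly q u \<noteq> 0" by (rule exists_nonroot)
  have F: "Fp 0 0 0 b4 2 u (m - u) = 0"
    using m2 by (simp add: Fp_def power2_eq_square algebra_simps)
  have "Numc 0 0 0 2 u (m - u) = 16 * (b4 - 4) * ((4 - u^2) * (u^2 - (m-u)^2) * ((m-u)^2 - 4))"
  proof -
    have "2^2 + u^2 + (m-u)^2 + 2 * u * (m - u) - 4 = b4 - 4"
      using m2 by (simp add: power2_eq_square algebra_simps)
    then show ?thesis unfolding Num0 by (simp add: algebra_simps)
  qed
  moreover have "(4 - u^2) * (u^2 - (m-u)^2) * ((m-u)^2 - 4) * (4 + u * (m - u)) = poly q u"
    by (simp add: q_def power2_eq_square algebra_simps)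
  ultimately show ?thesis using u F m0 assms
    by (intro exI[of _ 2] exI[of _ u] exI[of _ "m - u"]) (auto simp: P1_def P2_def P3_def)
qed



lemma regular_D:
  assumes "web_regular a p"
  shows "P1 (a$1) (p$1) (p$2) (p$3) \<noteq> 0 \<and> P2 (a$2) (p$1) (p$2) (p$3) \<noteq> 0 \<and> P3 (a$3) (p$1) (p$2) (p$3) \<noteq> 0"
proof -
  have R: "\<And>i j v. i \<noteq> j \<Longrightarrow> FD a p v = 0 \<Longrightarrow> v$i = 0 \<Longrightarrow> v$j = 0 \<Longrightarrow> v = 0"
    using assms unfolding web_regular_def tangent_plane_def frechet_Fa by blast
  have ax: "axis m (1::complex) \<noteq> (0::complex^3)" for m :: 3
    by (simp add: axis_eq_0_iff)
  have "P1 (a$1) (p$1) (p$2) (p$3) \<noteq> 0"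
  proof
    assume "P1 (a$1) (p$1) (p$2) (p$3) = 0"
    then have "FD a p (axis 1 1) = 0" by (simp add: FD_def axis_def)
    then show False using R[of 2 3 "axis 1 1"] ax[of 1] by (simp add: axis_def)
  qed
  moreover have "P2 (a$2) (p$1) (p$2) (p$3) \<noteq> 0"
  proof
    assume "P2 (a$2) (p$1) (p$2) (p$3) = 0"
    then have "FD a p (axis 2 1) = 0" by (simp add: FD_def axis_def)
    then show False using R[of 1 3 "axis 2 1"] ax[of 2] by (simp add: axis_def)
  qed
  moreover have "P3 (a$3) (p$1) (p$2) (p$3) \<noteq> 0"
  proof
    assume "P3 (a$3) (p$1) (p$2) (p$3) = 0"
    then have "FD a p (axis 3 1) = 0" by (simp add: FD_def axis_def)
    then show False using R[of 1 2 "axis 3 1"] ax[of 3] by (simp add: axis_def)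
  qed
  ultimately show ?thesis by blast
qed

lemma has_derivative_vecI:
  fixes f :: "'a::real_normed_vector \<Rightarrow> complex^'n"
  assumes "\<And>i. ((\<lambda>x. f x $ i) has_derivative (\<lambda>h. f' h $ i)) (at z)"
  shows "(f has_derivative f') (at z)"
proof (subst has_derivative_componentwise_within, intro ballI)
  fix b :: "complex^'n" assume "b \<in> Basis"
  then obtain i u where b: "b = axis i u" unfolding Basis_vec_def by auto
  have "((\<lambda>x. inner (f x $ i) u) has_derivative (\<lambda>h. inner (f' h $ i) u)) (at z)"
    by (rule bounded_linear.has_derivative[OF bounded_linear_inner_left assms])
  then show "((\<lambda>x. f x \<bullet> b) has_derivative (\<lambda>x. f' x \<bullet> b)) (at z)"
    by (simp add: b inner_axis)
qed

lemma chain_field: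
  assumes "(g has_field_derivative g') (at (f x))" "(f has_derivative f') (at x)"
  shows "((\<lambda>y. g (f y)) has_derivative (\<lambda>h. g' * f' h)) (at x)"
  using diff_chain_at[OF assms(2) assms(1)[unfolded has_field_derivative_def]] by (simp add: o_def)

lemma trig_surf:
  fixes u v :: complex
  shows "(2*cos u)^2 + (2*cos v)^2 + (-2*cos(u+v))^2 + (2*cos u)*(2*cos v)*(-2*cos(u+v)) = 4"
proof -
  have su: "sin u ^2 + cos u ^2 = 1" and sv: "sin v ^2 + cos v ^2 = 1" by simp_all
  show ?thesis unfolding cos_add using su sv by algebra
qed

lemma trig_factor:
  fixes u v z :: complex
  shows "(2*cos u)^2 + (2*cos v)^2 + z^2 + (2*cos u)*(2*cos v)*z - 4 = (z + 2*cos(u+v)) * (z + 2*cos(u-v))"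
proof -
  have su: "sin u ^2 + cos u ^2 = 1" and sv: "sin v ^2 + cos v ^2 = 1" by simp_all
  show ?thesis unfolding cos_add cos_diff using su sv by algebra
qed

lemma trig_P:
  fixes u v :: complex
  shows "2*(2*cos u) + (2*cos v)*(-2*cos(u+v)) = 4 * sin v * sin (u+v)"
    "2*(2*cos v) + (2*cos u)*(-2*cos(u+v)) = 4 * sin u * sin (u+v)"
    "2*(-2*cos(u+v)) + (2*cos u)*(2*cos v) = 4 * sin u * sin v"
proof -
  have su: "sin u ^2 + cos u ^2 = 1" and sv: "sin v ^2 + cos v ^2 = 1" by simp_all
  show "2*(2*cos u) + (2*cos v)*(-2*cos(u+v)) = 4 * sin v * sin (u+v)"
    unfolding cos_add sin_add using su sv by algebra
  show "2*(2*cos v) + (2*cos u)*(-2*cos(u+v)) = 4 * sin u * sin (u+v)"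
    unfolding cos_add sin_add using su sv by algebra
  show "2*(-2*cos(u+v)) + (2*cos u)*(2*cos v) = 4 * sin u * sin v"
    unfolding cos_add by (simp add: algebra_simps)
qed

lemma cont_nbhd:
  fixes f :: "complex \<Rightarrow> complex"
  assumes "isCont f xc" "e > 0"
  obtains d where "d > 0" "\<And>x. cmod (x - xc) < d \<Longrightarrow> cmod (f x - f xc) < e"
  using assms continuous_at_eps_delta[of xc f] by (auto simp: dist_norm)


definition ps :: "complex^2 \<Rightarrow> complex^3" where
  "ps z = vector [2 * cos (z$1), 2 * cos (z$2), -2 * cos (z$1 + z$2)]"

definition Dps :: "complex^2 \<Rightarrow> complex^2 \<Rightarrow> complex^3" where
  "Dps z w = vector [-2 * sin (z$1) * w$1, -2 * sin (z$2) * w$2, 2 * sin (z$1 + z$2) * (w$1 + w$2)]"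

lemma ps_deriv: "(ps has_derivative Dps z) (at z)"
proof (rule has_derivative_vecI)
  fix i :: 3
  have c1: "((\<lambda>x::complex^2. 2 * cos (x$1)) has_derivative (\<lambda>h. (-2 * sin (z$1)) * h$1)) (at z)"
    by (rule chain_field[where g="\<lambda>t. 2 * cos t" and f="\<lambda>x. x$1"])
       (auto intro!: derivative_eq_intros)
  have c2: "((\<lambda>x::complex^2. 2 * cos (x$2)) has_derivative (\<lambda>h. (-2 * sin (z$2)) * h$2)) (at z)"
    by (rule chain_field[where g="\<lambda>t. 2 * cos t" and f="\<lambda>x. x$2"])
       (auto intro!: derivative_eq_intros)
  have c3: "((\<lambda>x::complex^2. -2 * cos (x$1 + x$2)) has_derivative (\<lambda>h. (2 * sin (z$1 + z$2)) * (h$1 + h$2))) (at z)"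
    by (rule chain_field[where g="\<lambda>t. -2 * cos t" and f="\<lambda>x. x$1 + x$2"])
       (auto intro!: derivative_eq_intros)
  show "((\<lambda>x. ps x $ i) has_derivative (\<lambda>h. Dps z h $ i)) (at z)"
    using exhaust_3[of i] c1 c2 c3 by (auto simp: ps_def Dps_def)
qed

lemma Dps_smult: "Dps z (c *s w) = c *s Dps z w"
  by (simp add: Dps_def vec_eq_iff forall_3 algebra_simps)

lemma inj_Dps:
  assumes "sin (z$1) \<noteq> 0" "sin (z$2) \<noteq> 0"
  shows "inj (Dps z)"
proof (rule injI)
  fix w w' assume "Dps z w = Dps z w'"
  then have "Dps z w $ 1 = Dps z w' $ 1" "Dps z w $ 2 = Dps z w' $ 2" by simp_all
  then have "w$1 = w'$1" "w$2 = w'$2" using assms by (simp_all add: Dps_def)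
  then show "w = w'" by (simp add: vec_eq_iff forall_2)
qed


lemma local_inv_cos:
  fixes xc :: complex
  assumes "sin xc \<noteq> 0"
  obtains r where "r > 0" "inj_on (\<lambda>t. 2 * cos t) (ball xc r)"
proof -
  have hol: "(\<lambda>t. 2 * cos t) holomorphic_on UNIV" by (auto intro!: holomorphic_intros)
  have "((\<lambda>t. 2 * cos t) has_field_derivative (-2 * sin xc)) (at xc)"
    by (auto intro!: derivative_eq_intros)
  then have "deriv (\<lambda>t. 2 * cos t) xc = -2 * sin xc" by (rule DERIV_imp_deriv)
  then have "deriv (\<lambda>t. 2 * cos t) xc \<noteq> 0" using assms by simp
  from has_complex_derivative_locally_injective[OF hol _ open_UNIV this] that show ?thesis by blast
qed

lemma inv_cos_on:
  fixes U :: "complex set"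
  assumes "open U" "inj_on (\<lambda>t. 2 * cos t) U"
  obtains G where "open ((\<lambda>t. 2 * cos t) ` U)" "continuous_on ((\<lambda>t. 2 * cos t) ` U) G"
    "\<And>u. u \<in> U \<Longrightarrow> G (2 * cos u) = u"
proof -
  have hol: "(\<lambda>t. 2 * cos t) holomorphic_on U" by (auto intro!: holomorphic_intros)
  have op: "open ((\<lambda>t. 2 * cos t) ` U)" by (rule open_mapping_thm3[OF hol assms])
  obtain G where G: "G holomorphic_on ((\<lambda>t. 2 * cos t) ` U)" "\<And>z. z \<in> U \<Longrightarrow> G (2 * cos z) = z"
    using holomorphic_has_inverse[OF hol assms] by metis
  show ?thesis using that[OF op holomorphic_on_imp_continuous_on[OF G(1)]] G(2) by blast
qed

lemma backward:
  assumes a: "a$1 = 0" "a$2 = 0" "a$3 = 0" "a$4 = 4" and reg: "web_regular a p"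
  shows "locally_parallelizable_at a p"
proof -
  have Faeq: "Fa a x = (x$1)^2 + (x$2)^2 + (x$3)^2 + x$1 * x$2 * x$3 - 4" for x
    using a by (simp add: Fa_def)
  have pS: "Fa a p = 0" using reg by (simp add: web_regular_def smooth_pt_def Sa_def)
  have Pp: "P1 0 (p$1) (p$2) (p$3) \<noteq> 0" "P2 0 (p$1) (p$2) (p$3) \<noteq> 0" "P3 0 (p$1) (p$2) (p$3) \<noteq> 0"
    using regular_D[OF reg] a by auto
  define \<alpha> where "\<alpha> = Arccos (p$1 / 2)"
  define \<beta>1 where "\<beta>1 = Arccos (p$2 / 2)"
  have ca: "2 * cos \<alpha> = p$1" and cb1: "2 * cos \<beta>1 = p$2" by (simp_all add: \<alpha>_def \<beta>1_def)
  have "(p$3 + 2 * cos (\<alpha> + \<beta>1)) * (p$3 + 2 * cos (\<alpha> - \<beta>1)) = 0"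
    using trig_factor[of \<alpha> \<beta>1 "p$3"] pS unfolding Faeq ca cb1 by (simp add: algebra_simps)
  then obtain \<beta> where cb: "2 * cos \<beta> = p$2" and p3: "p$3 = -2 * cos (\<alpha> + \<beta>)"
  proof (cases "p$3 + 2 * cos (\<alpha> + \<beta>1) = 0")
    case True
    then have "p$3 = -2 * cos (\<alpha> + \<beta>1)" by algebra
    then show ?thesis using that[of \<beta>1] cb1 by blast
  next
    case False
    then have "p$3 + 2 * cos (\<alpha> - \<beta>1) = 0" using \<open>_ * _ = 0\<close> by simp
    then have "p$3 = -2 * cos (\<alpha> - \<beta>1)" by algebra
    then have "p$3 = -2 * cos (\<alpha> + - \<beta>1)" by simp
    moreover have "2 * cos (- \<beta>1) = p$2" using cb1 by simp
    ultimately show ?thesis using that[of "- \<beta>1"] by blast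
  qed
  have Pt1: "P1 0 (p$1) (p$2) (p$3) = 2*(2*cos \<alpha>) + (2*cos \<beta>)*(-2*cos(\<alpha>+\<beta>))"
    by (simp add: P1_def ca cb p3)
  have Pt2: "P2 0 (p$1) (p$2) (p$3) = 2*(2*cos \<beta>) + (2*cos \<alpha>)*(-2*cos(\<alpha>+\<beta>))"
    by (simp add: P2_def ca cb p3)
  have Pt3: "P3 0 (p$1) (p$2) (p$3) = 2*(-2*cos(\<alpha>+\<beta>)) + (2*cos \<alpha>)*(2*cos \<beta>)"
    by (simp add: P3_def ca cb p3)
  have Pt: "P1 0 (p$1) (p$2) (p$3) = 4 * sin \<beta> * sin (\<alpha> + \<beta>)"
    "P2 0 (p$1) (p$2) (p$3) = 4 * sin \<alpha> * sin (\<alpha> + \<beta>)"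
    "P3 0 (p$1) (p$2) (p$3) = 4 * sin \<alpha> * sin \<beta>"
    unfolding Pt1 Pt2 Pt3 trig_P by simp_all
  have sa: "sin \<alpha> \<noteq> 0" and sb: "sin \<beta> \<noteq> 0" and sab: "sin (\<alpha> + \<beta>) \<noteq> 0"
    using Pp Pt by auto
  define q3 where "q3 = -2 * cos (\<alpha> - \<beta>)"
  have pq: "p$3 - q3 = 4 * sin \<alpha> * sin \<beta>"
    unfolding p3 q3_def cos_add cos_diff by (simp add: algebra_simps)
  define \<delta> where "\<delta> = cmod (p$3 - q3) / 2"
  have dpos: "\<delta> > 0" using pq sa sb by (simp add: \<delta>_def)
  obtain e1 where e1: "e1 > 0" "\<And>x. cmod (x - \<alpha>) < e1 \<Longrightarrow> cmod (sin x - sin \<alpha>) < cmod (sin \<alpha>)"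
    using cont_nbhd[where f=sin and xc=\<alpha> and e="cmod (sin \<alpha>)"] sa by (auto intro: continuous_intros)
  obtain e2 where e2: "e2 > 0" "\<And>x. cmod (x - \<beta>) < e2 \<Longrightarrow> cmod (sin x - sin \<beta>) < cmod (sin \<beta>)"
    using cont_nbhd[where f=sin and xc=\<beta> and e="cmod (sin \<beta>)"] sb by (auto intro: continuous_intros)
  obtain e3 where e3: "e3 > 0" "\<And>x. cmod (x - (\<alpha> + \<beta>)) < e3 \<Longrightarrow> cmod (sin x - sin (\<alpha> + \<beta>)) < cmod (sin (\<alpha> + \<beta>))"
    using cont_nbhd[where f=sin and xc="\<alpha> + \<beta>" and e="cmod (sin (\<alpha> + \<beta>))"] sab by (auto intro: continuous_intros)
  obtain e4 where e4: "e4 > 0" "\<And>x. cmod (x - (\<alpha> + \<beta>)) < e4 \<Longrightarrow> cmod (cos x - cos (\<alpha> + \<beta>)) < \<delta>/2"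
    using cont_nbhd[where f=cos and xc="\<alpha> + \<beta>" and e="\<delta>/2"] dpos by (auto intro: continuous_intros)
  obtain e5 where e5: "e5 > 0" "\<And>x. cmod (x - (\<alpha> - \<beta>)) < e5 \<Longrightarrow> cmod (cos x - cos (\<alpha> - \<beta>)) < \<delta>/2"
    using cont_nbhd[where f=cos and xc="\<alpha> - \<beta>" and e="\<delta>/2"] dpos by (auto intro: continuous_intros)
  obtain r1 where r1: "r1 > 0" "inj_on (\<lambda>t. 2 * cos t) (ball \<alpha> r1)" using local_inv_cos[OF sa] by blast
  obtain r2 where r2: "r2 > 0" "inj_on (\<lambda>t. 2 * cos t) (ball \<beta> r2)" using local_inv_cos[OF sb] by blast
  define \<epsilon> where "\<epsilon> = min e1 (min e2 (min (e3/2) (min (e4/2) (min (e5/2) (min r1 r2)))))"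
  have epos: "\<epsilon> > 0" using e1 e2 e3 e4 e5 r1 r2 by (simp add: \<epsilon>_def)
  have ele: "\<epsilon> \<le> e1" "\<epsilon> \<le> e2" "\<epsilon> \<le> e3/2" "\<epsilon> \<le> e4/2" "\<epsilon> \<le> e5/2" "\<epsilon> \<le> r1" "\<epsilon> \<le> r2"
    by (simp only: \<epsilon>_def min_le_iff_disj; simp)+
  define U1 where "U1 = ball \<alpha> \<epsilon>"
  define U2 where "U2 = ball \<beta> \<epsilon>"
  have good: "sin u \<noteq> 0 \<and> sin v \<noteq> 0 \<and> sin (u + v) \<noteq> 0 \<and> cmod (-2 * cos (u + v) - p$3) < \<delta>
      \<and> \<not> cmod (-2 * cos (u - v) - p$3) < \<delta>" if "u \<in> U1" "v \<in> U2" for u v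
  proof -
    have du: "cmod (u - \<alpha>) < \<epsilon>" and dv: "cmod (v - \<beta>) < \<epsilon>"
      using that by (auto simp: U1_def U2_def dist_norm norm_minus_commute)
    have dsum: "cmod ((u + v) - (\<alpha> + \<beta>)) < 2 * \<epsilon>"
      using norm_triangle_lt[of "u - \<alpha>" "v - \<beta>" "2 * \<epsilon>"] du dv by (simp add: algebra_simps)
    have ddif: "cmod ((u - v) - (\<alpha> - \<beta>)) < 2 * \<epsilon>"
      using norm_triangle_lt[of "u - \<alpha>" "\<beta> - v" "2 * \<epsilon>"] du dv by (simp add: algebra_simps norm_minus_commute)
    have "sin u \<noteq> 0" using e1(2)[of u] du ele by force
    moreover have "sin v \<noteq> 0" using e2(2)[of v] dv ele by force
    moreover have "sin (u + v) \<noteq> 0" using e3(2)[of "u + v"] dsum ele by force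
    moreover have c1: "cmod (cos (u + v) - cos (\<alpha> + \<beta>)) < \<delta>/2" using e4(2)[of "u + v"] dsum ele by force
    moreover have c2: "cmod (cos (u - v) - cos (\<alpha> - \<beta>)) < \<delta>/2" using e5(2)[of "u - v"] ddif ele by force
    moreover have "cmod (-2 * cos (u + v) - p$3) < \<delta>"
    proof -
      have e: "-2 * cos (u + v) - p$3 = (-2) * (cos (u + v) - cos (\<alpha> + \<beta>))" by (simp add: p3 algebra_simps)
      have "cmod (-2 * cos (u + v) - p$3) = 2 * cmod (cos (u + v) - cos (\<alpha> + \<beta>))"
        unfolding e norm_mult by simp
      then show ?thesis using c1 by linarith
    qed
    moreover have "\<not> cmod (-2 * cos (u - v) - p$3) < \<delta>"
    proof
      assume h: "cmod (-2 * cos (u - v) - p$3) < \<delta>"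
      have e: "-2 * cos (u - v) - q3 = (-2) * (cos (u - v) - cos (\<alpha> - \<beta>))" by (simp add: q3_def algebra_simps)
      have "cmod (-2 * cos (u - v) - q3) = 2 * cmod (cos (u - v) - cos (\<alpha> - \<beta>))"
        unfolding e norm_mult by simp
      then have h2: "cmod (-2 * cos (u - v) - q3) < \<delta>" using c2 by linarith
      have "cmod (p$3 - q3) \<le> cmod (-2 * cos (u - v) - p$3) + cmod (-2 * cos (u - v) - q3)"
      proof -
        have "p$3 - q3 = (-2 * cos (u - v) - q3) - (-2 * cos (u - v) - p$3)" by simp
        then have "cmod (p$3 - q3) \<le> cmod (-2 * cos (u - v) - q3) + cmod (-2 * cos (u - v) - p$3)"
          by (metis norm_triangle_ineq4)
        then show ?thesis by simp
      qed
      then show False using h h2 by (simp add: \<delta>_def)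
    qed
    ultimately show ?thesis by blast
  qed
  have openU1: "open U1" and openU2: "open U2" by (simp_all add: U1_def U2_def)
  have aU1: "\<alpha> \<in> U1" and bU2: "\<beta> \<in> U2" using epos by (simp_all add: U1_def U2_def)
  have inj1: "inj_on (\<lambda>t. 2 * cos t) U1"
    by (rule inj_on_subset[OF r1(2)]) (use ele in \<open>auto simp: U1_def\<close>)
  have inj2: "inj_on (\<lambda>t. 2 * cos t) U2"
    by (rule inj_on_subset[OF r2(2)]) (use ele in \<open>auto simp: U2_def\<close>)
  obtain G1 where G1: "open ((\<lambda>t. 2 * cos t) ` U1)" "continuous_on ((\<lambda>t. 2 * cos t) ` U1) G1"
    "\<And>u. u \<in> U1 \<Longrightarrow> G1 (2 * cos u) = u" using inv_cos_on[OF openU1 inj1] by blast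
  obtain G2 where G2: "open ((\<lambda>t. 2 * cos t) ` U2)" "continuous_on ((\<lambda>t. 2 * cos t) ` U2) G2"
    "\<And>u. u \<in> U2 \<Longrightarrow> G2 (2 * cos u) = u" using inv_cos_on[OF openU2 inj2] by blast
  define W1 where "W1 = (\<lambda>t. 2 * cos t) ` U1"
  define W2 where "W2 = (\<lambda>t. 2 * cos t) ` U2"
  define V where "V = {z::complex^2. z$1 \<in> U1 \<and> z$2 \<in> U2}"
  define B where "B = ball (p$3) \<delta>"
  define N where "N = {x::complex^3. x$1 \<in> W1 \<and> x$2 \<in> W2 \<and> x$3 \<in> B}"
  define phi where "phi x = ((\<chi> m. if m = 1 then G1 (x$1) else G2 (x$2)) :: complex^2)" for x :: "complex^3"
  have phi1: "phi x $ 1 = G1 (x$1)" and phi2: "phi x $ 2 = G2 (x$2)" for x by (simp_all add: phi_def)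
  have openV: "open V"
  proof -
    have "V = (\<lambda>z. z$1) -` U1 \<inter> (\<lambda>z. z$2) -` U2" by (auto simp: V_def)
    then show ?thesis using openU1 openU2 by (simp add: open_Int open_vimage_vec_nth)
  qed
  have openN: "open N"
  proof -
    have "N = (\<lambda>x. x$1) -` W1 \<inter> (\<lambda>x. x$2) -` W2 \<inter> (\<lambda>x. x$3) -` B" by (auto simp: N_def)
    then show ?thesis using G1(1) G2(1) by (simp add: W1_def W2_def B_def open_Int open_vimage_vec_nth)
  qed
  have pN: "p \<in> N"
  proof -
    have "p$1 \<in> W1" unfolding W1_def using aU1 ca by (metis image_eqI)
    moreover have "p$2 \<in> W2" unfolding W2_def using bU2 cb by (metis image_eqI)
    moreover have "p$3 \<in> B" using dpos by (simp add: B_def)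
    ultimately show ?thesis by (simp add: N_def)
  qed
  have psV: "ps z \<in> Sa a \<inter> N" if "z \<in> V" for z
  proof -
    have u: "z$1 \<in> U1" and v: "z$2 \<in> U2" using that by (auto simp: V_def)
    have "Fa a (ps z) = 0" unfolding Faeq using trig_surf[of "z$1" "z$2"] by (simp add: ps_def)
    moreover have "ps z $ 1 \<in> W1" using u by (simp add: ps_def W1_def)
    moreover have "ps z $ 2 \<in> W2" using v by (simp add: ps_def W2_def)
    moreover have "ps z $ 3 \<in> B" using good[OF u v] by (simp add: ps_def B_def dist_norm norm_minus_commute)
    ultimately show ?thesis by (simp add: Sa_def N_def)
  qed
  have surj: "phi x \<in> V \<and> ps (phi x) = x" if xS: "x \<in> Sa a \<inter> N" for x
  proof -
    obtain u where u: "u \<in> U1" "x$1 = 2 * cos u" using xS by (auto simp: N_def W1_def)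
    obtain v where v: "v \<in> U2" "x$2 = 2 * cos v" using xS by (auto simp: N_def W2_def)
    have pu: "phi x $ 1 = u" "phi x $ 2 = v" using u v G1(3) G2(3) by (simp_all add: phi1 phi2)
    have "Fa a x = 0" using xS by (simp add: Sa_def)
    then have "(x$3 + 2 * cos (u + v)) * (x$3 + 2 * cos (u - v)) = 0"
      using trig_factor[of u v "x$3"] unfolding Faeq u(2) v(2) by (simp add: algebra_simps)
    moreover have "x$3 \<noteq> -2 * cos (u - v)"
    proof
      assume "x$3 = -2 * cos (u - v)"
      moreover have "x$3 \<in> B" using xS by (simp add: N_def)
      ultimately show False using good[OF u(1) v(1)] by (simp add: B_def dist_norm norm_minus_commute)
    qed
    ultimately have x3: "x$3 = -2 * cos (u + v)"
      by (metis (no_types, lifting) add_eq_0_iff2 mult_eq_0_iff mult_minus_left)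
    have "phi x \<in> V" using pu u v by (simp add: V_def)
    moreover have "ps (phi x) = x"
      using pu u v x3 by (simp add: ps_def vec_eq_iff forall_3)
    ultimately show ?thesis by blast
  qed
  have inv1: "phi (ps z) = z" if "z \<in> V" for z
  proof -
    have "z$1 \<in> U1" "z$2 \<in> U2" using that by (auto simp: V_def)
    then show ?thesis using G1(3) G2(3) by (simp add: vec_eq_iff forall_2 phi1 phi2 ps_def)
  qed
  have contps: "continuous_on V ps"
    by (rule continuous_at_imp_continuous_on)
       (use ps_deriv has_derivative_continuous in blast)
  have contphi: "continuous_on (Sa a \<inter> N) phi"
    unfolding phi_def
  proof (intro continuous_on_vec_lambda)
    fix m :: 2
    have c1: "continuous_on (Sa a \<inter> N) (\<lambda>x. G1 (x$1))"
      by (rule continuous_on_compose2[OF G1(2)]) (auto intro: continuous_intros simp: N_def W1_def)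
    have c2: "continuous_on (Sa a \<inter> N) (\<lambda>x. G2 (x$2))"
      by (rule continuous_on_compose2[OF G2(2)]) (auto intro: continuous_intros simp: N_def W2_def)
    show "continuous_on (Sa a \<inter> N) (\<lambda>x. if m = 1 then G1 (x$1) else G2 (x$2))"
      using c1 c2 by (cases "m = 1") auto
  qed
  have hom: "homeomorphism V (Sa a \<inter> N) ps phi"
    unfolding homeomorphism_def
  proof (intro conjI ballI)
    show "ps ` V = Sa a \<inter> N"
    proof
      show "ps ` V \<subseteq> Sa a \<inter> N" using psV by blast
      show "Sa a \<inter> N \<subseteq> ps ` V"
      proof
        fix x assume "x \<in> Sa a \<inter> N"
        then have "phi x \<in> V" "ps (phi x) = x" using surj by auto
        then show "x \<in> ps ` V" by (metis image_eqI)
      qed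
    qed
    show "phi ` (Sa a \<inter> N) = V"
    proof
      show "phi ` (Sa a \<inter> N) \<subseteq> V" using surj by blast
      show "V \<subseteq> phi ` (Sa a \<inter> N)"
      proof
        fix z assume "z \<in> V"
        then have "ps z \<in> Sa a \<inter> N" "phi (ps z) = z" using psV inv1 by auto
        then show "z \<in> phi ` (Sa a \<inter> N)" by (metis image_eqI)
      qed
    qed
  qed (use inv1 surj contps contphi in auto)
  have regN: "Sa a \<inter> N \<subseteq> {q. web_regular a q}"
  proof
    fix x assume x: "x \<in> Sa a \<inter> N"
    define z where "z = phi x"
    have zV: "z \<in> V" and xz: "x = ps z" using surj[OF x] by (auto simp: z_def)
    define u where "u = z$1"
    define v where "v = z$2"
    have uv: "u \<in> U1" "v \<in> U2" "x = vector [2 * cos u, 2 * cos v, -2 * cos (u + v)]"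
      using zV xz by (auto simp: V_def u_def v_def ps_def)
    have g: "sin u \<noteq> 0" "sin v \<noteq> 0" "sin (u + v) \<noteq> 0" using good[OF uv(1,2)] by auto
    have "Fa a x = 0" using x by (simp add: Sa_def)
    moreover have "P1 (a$1) (x$1) (x$2) (x$3) \<noteq> 0"
      using trig_P(1)[where u=u and v=v] g a(1) by (simp add: uv(3) P1_def)
    moreover have "P2 (a$2) (x$1) (x$2) (x$3) \<noteq> 0"
      using trig_P(2)[where u=u and v=v] g a(2) by (simp add: uv(3) P2_def)
    moreover have "P3 (a$3) (x$1) (x$2) (x$3) \<noteq> 0"
      using trig_P(3)[where u=u and v=v] g a(3) by (simp add: uv(3) P3_def)
    ultimately show "x \<in> {q. web_regular a q}" by (simp add: regular_I)
  qed
  have sinV: "sin (z$1) \<noteq> 0 \<and> sin (z$2) \<noteq> 0 \<and> sin (z$1 + z$2) \<noteq> 0" if "z \<in> V" for z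
    using good[of "z$1" "z$2"] that by (auto simp: V_def)
  have hm: "holo_map ps Dps V"
    unfolding holo_map_def using openV ps_deriv Dps_smult by blast
  have injV: "\<forall>z\<in>V. inj (Dps z)" using sinV inj_Dps by blast
  have kerV: "\<forall>i::3. \<exists>\<alpha> \<beta>::complex. (\<alpha>, \<beta>) \<noteq> (0, 0) \<and>
        (\<forall>z\<in>V. {w. (Dps z w)$i = 0} = {w. \<alpha> * w$1 + \<beta> * w$2 = 0})"
  proof (unfold forall_3, intro conjI)
    show "\<exists>\<alpha> \<beta>::complex. (\<alpha>, \<beta>) \<noteq> (0, 0) \<and> (\<forall>z\<in>V. {w. (Dps z w)$1 = 0} = {w. \<alpha> * w$1 + \<beta> * w$2 = 0})"
      by (rule exI[of _ 1], rule exI[of _ 0]) (use sinV in \<open>auto simp: Dps_def\<close>)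
    show "\<exists>\<alpha> \<beta>::complex. (\<alpha>, \<beta>) \<noteq> (0, 0) \<and> (\<forall>z\<in>V. {w. (Dps z w)$2 = 0} = {w. \<alpha> * w$1 + \<beta> * w$2 = 0})"
      by (rule exI[of _ 0], rule exI[of _ 1]) (use sinV in \<open>auto simp: Dps_def\<close>)
    show "\<exists>\<alpha> \<beta>::complex. (\<alpha>, \<beta>) \<noteq> (0, 0) \<and> (\<forall>z\<in>V. {w. (Dps z w)$3 = 0} = {w. \<alpha> * w$1 + \<beta> * w$2 = 0})"
      by (rule exI[of _ 1], rule exI[of _ 1]) (use sinV in \<open>auto simp: Dps_def\<close>)
  qed
  show ?thesis unfolding locally_parallelizable_at_def
    by (rule exI[of _ V], rule exI[of _ N], rule exI[of _ ps], rule exI[of _ phi], rule exI[of _ Dps])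
       (use openN pN regN hm hom injV kerV in blast)
qed



lemma key:
  fixes i j k :: 3
  assumes reg: "web_regular a p" and lp: "locally_parallelizable_at a p"
    and ijk: "i \<noteq> j" "i \<noteq> k" "j \<noteq> k"
  shows "Numc (ac a i) (ac a j) (ac a k) (p$i) (p$j) (p$k) = 0 \<and>
         Numc (- ac a i) (- ac a j) (ac a k) (- p$i) (- p$j) (p$k) = 0"
proof -
  obtain \<rho> f g h c d f' g' h' f2 where rho: "\<rho> > 0"
    and eq: "\<And>s t. cmod s < \<rho> \<Longrightarrow> cmod t < \<rho> \<Longrightarrow> Fp (ac a i) (ac a j) (ac a k) (a$4) (f s) (g t) (h (c * s + d * t)) = 0"
    and df: "\<And>s. cmod s < \<rho> \<Longrightarrow> (f has_field_derivative f' s) (at s)"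
    and dg: "\<And>t. cmod t < \<rho> \<Longrightarrow> (g has_field_derivative g' t) (at t)"
    and dh: "\<And>s t. cmod s < \<rho> \<Longrightarrow> cmod t < \<rho> \<Longrightarrow> (h has_field_derivative h' (c * s + d * t)) (at (c * s + d * t))"
    and ddf: "(f' has_field_derivative f2) (at 0)" and nz: "d \<noteq> 0" "f' 0 \<noteq> 0" "g' 0 \<noteq> 0"
    and v0: "f 0 = p$i" "g 0 = p$j" "h 0 = p$k"
    by (rule chart[OF reg lp ijk]) blast
  have 1: "Numc (ac a i) (ac a j) (ac a k) (f 0) (g 0) (h 0) = 0"
    by (rule curv[OF rho, where f=f and g=g and h=h and f'=f' and g'=g' and h'=h' and c=c and d=d and fpp=f2])
       (use eq df dg dh ddf nz in auto)
  have 2: "Numc (- ac a i) (- ac a j) (ac a k) ((\<lambda>s. - f s) 0) ((\<lambda>t. - g t) 0) (h 0) = 0"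
  proof (rule curv[OF rho, where f="\<lambda>s. - f s" and g="\<lambda>t. - g t" and h=h and c=c and d=d
        and f'="\<lambda>s. - f' s" and g'="\<lambda>t. - g' t" and h'=h' and fpp="- f2"])
    show "Fp (- ac a i) (- ac a j) (ac a k) (a$4) (- f s) (- g t) (h (c * s + d * t)) = 0"
      if "cmod s < \<rho>" "cmod t < \<rho>" for s t
      using eq that Fp_sign by auto
    show "((\<lambda>s. - f s) has_field_derivative - f' s) (at s)" if "cmod s < \<rho>" for s
      using df that by (auto intro: DERIV_minus)
    show "((\<lambda>t. - g t) has_field_derivative - g' t) (at t)" if "cmod t < \<rho>" for t
      using dg that by (auto intro: DERIV_minus)
    show "((\<lambda>s. - f' s) has_field_derivative - f2) (at 0)" using ddf by (rule DERIV_minus)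
  qed (use dh nz in auto)
  show ?thesis using 1 2 v0 by simp
qed

lemma Pprod_perm:
  fixes i j k :: 3
  assumes "i \<noteq> j" "i \<noteq> k" "j \<noteq> k"
  shows "P1 (A 1) (x$1) (x$2) (x$3) * P2 (A 2) (x$1) (x$2) (x$3) * P3 (A 3) (x$1) (x$2) (x$3) =
         P1 (A i) (x$i) (x$j) (x$k) * P2 (A j) (x$i) (x$j) (x$k) * P3 (A k) (x$i) (x$j) (x$k)"
proof -
  have "(i,j,k) \<in> {(1,2,3),(1,3,2),(2,1,3),(2,3,1),(3,1,2),(3,2,1)}"
    using exhaust_3[of i] exhaust_3[of j] exhaust_3[of k] assms by auto
  then show ?thesis by (elim insertE emptyE) (simp_all add: P1_def P2_def P3_def algebra_simps)
qed

lemma mk_point: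
  fixes i j k :: 3
  assumes ijk: "i \<noteq> j" "i \<noteq> k" "j \<noteq> k"
    and F: "Fp (ac a i) (ac a j) (ac a k) (a$4) y1 y2 y3 = 0"
    and P: "P1 (ac a i) y1 y2 y3 * P2 (ac a j) y1 y2 y3 * P3 (ac a k) y1 y2 y3 \<noteq> 0"
  shows "\<exists>x. web_regular a x \<and> x$i = y1 \<and> x$j = y2 \<and> x$k = y3"
proof -
  define x :: "complex^3" where "x = (\<chi> m. if m = i then y1 else if m = j then y2 else y3)"
  have xi: "x$i = y1" "x$j = y2" "x$k = y3" using ijk by (auto simp: x_def)
  have "Fa a x = Fp (ac a 1) (ac a 2) (ac a 3) (a$4) (x$1) (x$2) (x$3)" by (simp add: Fa_Fp)
  also have "\<dots> = 0" using Fp_perm[OF ijk, of "ac a" "a$4" x] F xi by simp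
  finally have Fx: "Fa a x = 0" .
  have "P1 (ac a 1) (x$1) (x$2) (x$3) * P2 (ac a 2) (x$1) (x$2) (x$3) * P3 (ac a 3) (x$1) (x$2) (x$3) \<noteq> 0"
    using Pprod_perm[OF ijk, of "ac a" x] P xi by simp
  then have "web_regular a x" using Fx by (intro regular_I) auto
  then show ?thesis using xi by blast
qed

lemma contra:
  fixes i j k :: 3
  assumes H: "\<forall>p. web_regular a p \<longrightarrow> locally_parallelizable_at a p"
    and ijk: "i \<noteq> j" "i \<noteq> k" "j \<noteq> k"
  shows "ac a j = ac a k \<and> - ac a j = ac a k"
proof (rule conjI; rule ccontr)
  assume ne: "ac a j \<noteq> ac a k"
  obtain y1 y2 y3 where y: "Fp (ac a i) (ac a j) (ac a k) (a$4) y1 y2 y3 = 0" "P1 (ac a i) y1 y2 y3 \<noteq> 0"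
    "P2 (ac a j) y1 y2 y3 \<noteq> 0" "P3 (ac a k) y1 y2 y3 \<noteq> 0" "Numc (ac a i) (ac a j) (ac a k) y1 y2 y3 \<noteq> 0"
    using slice[OF ne, of "ac a i" "a$4"] by blast
  obtain x where x: "web_regular a x" "x$i = y1" "x$j = y2" "x$k = y3"
    using mk_point[OF ijk y(1)] y(2-4) by auto
  show False using key[OF x(1) _ ijk] H x y(5) by auto
next
  assume ne: "- ac a j \<noteq> ac a k"
  obtain y1 y2 y3 where y: "Fp (- ac a i) (- ac a j) (ac a k) (a$4) y1 y2 y3 = 0" "P1 (- ac a i) y1 y2 y3 \<noteq> 0"
    "P2 (- ac a j) y1 y2 y3 \<noteq> 0" "P3 (ac a k) y1 y2 y3 \<noteq> 0" "Numc (- ac a i) (- ac a j) (ac a k) y1 y2 y3 \<noteq> 0"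
    using slice[OF ne, of "- ac a i" "a$4"] by blast
  have F: "Fp (ac a i) (ac a j) (ac a k) (a$4) (- y1) (- y2) y3 = 0"
    using y(1) Fp_sign[of "ac a i" "ac a j" "ac a k" "a$4" "- y1" "- y2" y3] by simp
  have P: "P1 (ac a i) (- y1) (- y2) y3 * P2 (ac a j) (- y1) (- y2) y3 * P3 (ac a k) (- y1) (- y2) y3 \<noteq> 0"
  proof -
    have "P1 (ac a i) (- y1) (- y2) y3 = - P1 (- ac a i) y1 y2 y3"
      "P2 (ac a j) (- y1) (- y2) y3 = - P2 (- ac a j) y1 y2 y3"
      "P3 (ac a k) (- y1) (- y2) y3 = P3 (ac a k) y1 y2 y3"
      by (simp_all add: P1_def P2_def P3_def algebra_simps)
    then show ?thesis using y(2-4) by simp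
  qed
  obtain x where x: "web_regular a x" "x$i = - y1" "x$j = - y2" "x$k = y3"
    using mk_point[OF ijk F P] by auto
  show False using key[OF x(1) _ ijk] H x y(5) by auto
qed

lemma forward:
  assumes H: "\<forall>p. web_regular a p \<longrightarrow> locally_parallelizable_at a p"
  shows "a$1 = 0 \<and> a$2 = 0 \<and> a$3 = 0 \<and> a$4 = 4"
proof -
  have c1: "a$2 = a$3" "- a$2 = a$3" using contra[OF H, of 1 2 3] by auto
  have c2: "a$1 = a$3" "- a$1 = a$3" using contra[OF H, of 2 1 3] by auto
  have z: "a$1 = 0" "a$2 = 0" "a$3 = 0" using c1 c2 by auto
  have "a$4 = 4"
  proof (rule ccontr)
    assume ne: "a$4 \<noteq> 4"
    obtain y1 y2 y3 where y: "Fp 0 0 0 (a$4) y1 y2 y3 = 0" "P1 0 y1 y2 y3 \<noteq> 0"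
      "P2 0 y1 y2 y3 \<noteq> 0" "P3 0 y1 y2 y3 \<noteq> 0" "Numc 0 0 0 y1 y2 y3 \<noteq> 0"
      using zero_case[OF ne] by blast
    have ijk: "(1::3) \<noteq> 2" "(1::3) \<noteq> 3" "(2::3) \<noteq> 3" by simp_all
    obtain x where x: "web_regular a x" "x$1 = y1" "x$2 = y2" "x$3 = y3"
      using mk_point[OF ijk, of a y1 y2 y3] y z by auto
    show False using key[OF x(1) _ ijk] H x y(5) z by auto
  qed
  then show ?thesis using z by simp
qed


theorem theorem1p1:
  fixes a :: "complex^4"
  shows "(\<forall>p. web_regular a p \<longrightarrow> locally_parallelizable_at a p) \<longleftrightarrow>
         (a$1 = 0 \<and> a$2 = 0 \<and> a$3 = 0 \<and> a$4 = 4)"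
proof
  assume H: "\<forall>p. web_regular a p \<longrightarrow> locally_parallelizable_at a p"
  show "a$1 = 0 \<and> a$2 = 0 \<and> a$3 = 0 \<and> a$4 = 4" by (rule forward[OF H])
next
  assume "a$1 = 0 \<and> a$2 = 0 \<and> a$3 = 0 \<and> a$4 = 4"
  then show "\<forall>p. web_regular a p \<longrightarrow> locally_parallelizable_at a p"
    using backward by blast
qed

end
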